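(* Let $\omega\in\mathbb{F}_8$ be a root of $y^3+y+1$ and let $m\in\mathbb{N}$. Suppose $L,M,N$ are nonempty subsets of $[m]$ with $L\cup M\cup N\subsetneq[m]$, and at least two of the sets $L\setminus(M\cup N)$, $M\setminus(N\cup L)$, $N\setminus(L\cup M)$ are nonempty. Let $D=\Delta_L+\omega\Delta_M+\omega^2\Delta_N\subseteq\mathbb{F}_8^m$ and $D^c=\mathbb{F}_8^m\setminus D$. Writing $s=|L|+|M|+|N|$, the code $C_{D^c}$ is a $[2^{3m}-2^{s},\,m,\,7\cdot2^{3(m-1)}-7\cdot2^{s-3}]$ linear $4$-weight code over $\mathbb{F}_8$, whose codewords have weights $0$, $7\cdot2^{3(m-1)}-7\cdot2^{s-3}$, $7\cdot2^{3(m-1)}-6\cdot2^{s-3}$, $7\cdot2^{3(m-1)}-4\cdot2^{s-3}$ and $7\cdot2^{3(m-1)}$. Moreover, $C_{D^c}$ is a Griesmer code and hence distance optimal, and it is a minimal code if $s\le 3m-4$.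
   Context: $[m]=\{1,\dots,m\}$; $\Delta_L=\{w\in\mathbb{F}_2^m:\{i:w_i\ne0\}\subseteq L\}$. $A+\omega B+\omega^2C=\{a+\omega b+\omega^2c: a\in A,b\in B,c\in C\}$. For an ordered finite set $P\subseteq\mathbb{F}_8^m$, $C_P=\{(v\cdot d)_{d\in P}: v\in\mathbb{F}_8^m\}$ with $v\cdot d=\sum_iv_id_i$. An $l$-weight code has exactly $l$ distinct nonzero Hamming weights. An $[n,k,d]$ code over $\mathbb{F}_q$ is Griesmer if $\sum_{i=0}^{k-1}\lceil d/q^i\rceil=n$, and distance optimal if no $[n,k,d+1]$ linear code over $\mathbb{F}_q$ exists. A code is minimal if for every nonzero codeword $c$, each nonzero codeword $c'$ with $\mathrm{Supp}(c')\subseteq\mathrm{Supp}(c)$ is a scalar multiple of $c$. *)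

theory Defs
  imports Complex_Main "HOL-Library.Function_Algebras"
begin

text \<open>Vectors of length m over a field 'a: functions nat => 'a supported on [m] = {1..m}.\<close>
definition fvec :: "nat \<Rightarrow> (nat \<Rightarrow> 'a::field) set" where
  "fvec m = {v. \<forall>i. i \<notin> {1..m} \<longrightarrow> v i = 0}"

definition Delta :: "nat \<Rightarrow> nat set \<Rightarrow> (nat \<Rightarrow> 'a::field) set" where
  "Delta m L = {w \<in> fvec m. (\<forall>i. w i \<in> {0, 1}) \<and> {i. w i \<noteq> 0} \<subseteq> L}"

definition sumset3 :: "'a::field \<Rightarrow> (nat \<Rightarrow> 'a) set \<Rightarrow> (nat \<Rightarrow> 'a) set \<Rightarrow> (nat \<Rightarrow> 'a) set
    \<Rightarrow> (nat \<Rightarrow> 'a) set" where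
  "sumset3 \<omega> A B C = {(\<lambda>i. a i + \<omega> * b i + \<omega>^2 * c i) | a b c. a \<in> A \<and> b \<in> B \<and> c \<in> C}"

definition dotp :: "nat \<Rightarrow> (nat \<Rightarrow> 'a::field) \<Rightarrow> (nat \<Rightarrow> 'a) \<Rightarrow> 'a" where
  "dotp m v d = (\<Sum>i\<in>{1..m}. v i * d i)"

text \<open>The code C_P: codewords are indexed by the positions d in P (zero outside P).\<close>
definition codeP :: "nat \<Rightarrow> (nat \<Rightarrow> 'a::field) set \<Rightarrow> ((nat \<Rightarrow> 'a) \<Rightarrow> 'a) set" where
  "codeP m P = {(\<lambda>d. if d \<in> P then dotp m v d else 0) | v. v \<in> fvec m}"

text \<open>Generic notions for codes whose coordinates are indexed by a finite set I;
  a word is a function 'i => 'a vanishing outside I.\<close>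
definition words :: "'i set \<Rightarrow> ('i \<Rightarrow> 'a::field) set" where
  "words I = {c. \<forall>i. i \<notin> I \<longrightarrow> c i = 0}"

definition supp :: "'i set \<Rightarrow> ('i \<Rightarrow> 'a::field) \<Rightarrow> 'i set" where
  "supp I c = {i \<in> I. c i \<noteq> 0}"

definition hwt :: "'i set \<Rightarrow> ('i \<Rightarrow> 'a::field) \<Rightarrow> nat" where
  "hwt I c = card (supp I c)"

definition fscale :: "'a::field \<Rightarrow> ('i \<Rightarrow> 'a) \<Rightarrow> ('i \<Rightarrow> 'a)" where
  "fscale a c = (\<lambda>i. a * c i)"

interpretation fvs: vector_space "fscale :: 'a::field \<Rightarrow> ('i \<Rightarrow> 'a) \<Rightarrow> _"
  by unfold_locales (auto simp: fscale_def algebra_simps fun_eq_iff)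

definition is_linear_code :: "'i set \<Rightarrow> ('i \<Rightarrow> 'a::field) set \<Rightarrow> bool" where
  "is_linear_code I C \<longleftrightarrow> finite I \<and> C \<subseteq> words I \<and> fvs.subspace C"

definition code_dim :: "('i \<Rightarrow> 'a::field) set \<Rightarrow> nat" where
  "code_dim C = fvs.dim C"

definition nonzero_weights :: "'i set \<Rightarrow> ('i \<Rightarrow> 'a::field) set \<Rightarrow> nat set" where
  "nonzero_weights I C = {hwt I c | c. c \<in> C \<and> c \<noteq> 0}"

definition min_dist :: "'i set \<Rightarrow> ('i \<Rightarrow> 'a::field) set \<Rightarrow> nat" where
  "min_dist I C = Min (nonzero_weights I C)"

definition is_nkd_code :: "'i set \<Rightarrow> ('i \<Rightarrow> 'a::field) set \<Rightarrow> nat \<Rightarrow> nat \<Rightarrow> nat \<Rightarrow> bool" where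
  "is_nkd_code I C n k d \<longleftrightarrow> is_linear_code I C \<and> card I = n \<and> code_dim C = k \<and> min_dist I C = d"

definition is_l_weight :: "'i set \<Rightarrow> ('i \<Rightarrow> 'a::field) set \<Rightarrow> nat \<Rightarrow> bool" where
  "is_l_weight I C l \<longleftrightarrow> card (nonzero_weights I C) = l"

definition is_griesmer :: "'i set \<Rightarrow> ('i \<Rightarrow> 'a::{field,finite}) set \<Rightarrow> bool" where
  "is_griesmer I C \<longleftrightarrow>
     (\<Sum>i<code_dim C. nat \<lceil>real (min_dist I C) / real (card (UNIV :: 'a set)) ^ i\<rceil>) = card I"

definition distance_optimal :: "'i set \<Rightarrow> ('i \<Rightarrow> 'a::field) set \<Rightarrow> bool" where
  "distance_optimal I C \<longleftrightarrow>
     \<not> (\<exists>C' :: (nat \<Rightarrow> 'a) set. is_nkd_code {1..card I} C' (card I) (code_dim C) (min_dist I C + 1))"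

definition is_minimal_code :: "'i set \<Rightarrow> ('i \<Rightarrow> 'a::field) set \<Rightarrow> bool" where
  "is_minimal_code I C \<longleftrightarrow>
     (\<forall>c\<in>C. c \<noteq> 0 \<longrightarrow> (\<forall>c'\<in>C. c' \<noteq> 0 \<and> supp I c' \<subseteq> supp I c \<longrightarrow> (\<exists>a. c' = fscale a c)))"

end

theory Submission
  imports Defs "HOL-Library.FuncSet" "HOL-Computational_Algebra.Primes"
begin


lemma fiber_card:
  fixes f :: "'b::ab_group_add \<Rightarrow> 'c::ab_group_add"
  assumes fin: "finite G" and cl: "\<And>x y. x \<in> G \<Longrightarrow> y \<in> G \<Longrightarrow> x - y \<in> G"
    and hom: "\<And>x y. x \<in> G \<Longrightarrow> y \<in> G \<Longrightarrow> f (x - y) = f x - f y"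
  shows "card G = card (f ` G) * card {x\<in>G. f x = 0}"
proof -
  have G: "G = (\<Union>y\<in>f`G. {x\<in>G. f x = y})" by auto
  have eq: "card {x\<in>G. f x = y} = card {x\<in>G. f x = 0}" if yG: "y \<in> f ` G" for y
  proof -
    obtain x0 where x0: "x0 \<in> G" "f x0 = y" using yG by auto
    have z: "0 \<in> G" using cl[OF x0(1) x0(1)] by simp
    have nx: "- x0 \<in> G" using cl[OF z x0(1)] by simp
    have f0: "f 0 = 0" using hom[OF x0(1) x0(1)] by simp
    have "bij_betw (\<lambda>x. x - x0) {x\<in>G. f x = y} {x\<in>G. f x = 0}"
    proof (rule bij_betw_byWitness[where f'="\<lambda>x. x + x0"])
      show "\<forall>a\<in>{x \<in> G. f x = y}. a - x0 + x0 = a" by simp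
      show "\<forall>a'\<in>{x \<in> G. f x = 0}. a' + x0 - x0 = a'" by simp
      show "(\<lambda>x. x - x0) ` {x \<in> G. f x = y} \<subseteq> {x \<in> G. f x = 0}"
        using cl hom x0 by auto
      show "(\<lambda>x. x + x0) ` {x \<in> G. f x = 0} \<subseteq> {x \<in> G. f x = y}"
      proof clarify
        fix x assume x: "x \<in> G" "f x = 0"
        have "x - (- x0) \<in> G" using cl[OF x(1) nx] by simp
        moreover have "f (x - (- x0)) = f x - f (-x0)" using hom[OF x(1) nx] .
        moreover have "f (-x0) = - f x0" using hom[OF z x0(1)] f0 by simp
        ultimately show "x + x0 \<in> G \<and> f (x + x0) = y" using x x0 by simp
      qed
    qed
    then show ?thesis by (rule bij_betw_same_card)
  qed
  have "card G = (\<Sum>y\<in>f`G. card {x\<in>G. f x = y})"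
    by (subst G, rule card_UN_disjoint) (use fin in auto)
  also have "\<dots> = (\<Sum>y\<in>f`G. card {x\<in>G. f x = 0})" using eq by simp
  finally show ?thesis by simp
qed

lemma char2:
  assumes "card (UNIV :: 'a::{field,finite} set) = 8"
  shows "(1::'a) + 1 = 0"
proof -
  have "(\<Sum>y\<in>(UNIV::'a set). y + 1) = (\<Sum>y\<in>UNIV. y)"
    by (rule sum.reindex_bij_witness[where i="\<lambda>y. y - 1" and j="\<lambda>y. y + 1"]) auto
  hence "of_nat (card (UNIV::'a set)) = (0::'a)" by (simp add: sum.distrib)
  hence "(2::'a) * (2 * 2) = 0" using assms by simp
  hence "(2::'a) = 0" by (metis mult_eq_0_iff)
  thus ?thesis by simp
qed

lemma finite_supp_funs:
  assumes "finite I"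
  shows "finite {c :: 'i \<Rightarrow> 'a::{zero,finite}. \<forall>i. i \<notin> I \<longrightarrow> c i = 0}"
    and "card {c :: 'i \<Rightarrow> 'a::{zero,finite}. \<forall>i. i \<notin> I \<longrightarrow> c i = 0} = card (UNIV::'a set) ^ card I"
proof -
  define g where "g = (\<lambda>f::'i\<Rightarrow>'a. \<lambda>i. if i \<in> I then f i else 0)"
  have eq: "{c :: 'i \<Rightarrow> 'a. \<forall>i. i \<notin> I \<longrightarrow> c i = 0} = g ` (PiE I (\<lambda>_. UNIV))"
  proof (intro set_eqI iffI)
    fix c :: "'i\<Rightarrow>'a" assume "c \<in> {c. \<forall>i. i \<notin> I \<longrightarrow> c i = 0}"
    hence "c = g (restrict c I)" unfolding g_def by (auto simp: fun_eq_iff)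
    moreover have "restrict c I \<in> PiE I (\<lambda>_. UNIV)" by simp
    ultimately show "c \<in> g ` (PiE I (\<lambda>_. UNIV))" by blast
  next
    fix c assume "c \<in> g ` (PiE I (\<lambda>_. UNIV))"
    then show "c \<in> {c. \<forall>i. i \<notin> I \<longrightarrow> c i = 0}" unfolding g_def by auto
  qed
  have inj: "inj_on g (PiE I (\<lambda>_. UNIV))"
  proof (rule inj_onI)
    fix x y assume x: "x \<in> PiE I (\<lambda>_. UNIV)" and y: "y \<in> PiE I (\<lambda>_. UNIV)" and e: "g x = g y"
    show "x = y"
    proof (rule PiE_ext[OF x y])
      fix i assume "i \<in> I"
      then show "x i = y i" using fun_cong[OF e, of i] unfolding g_def by simp
    qed
  qed
  have fin: "finite (PiE I (\<lambda>_. UNIV::'a set))" using assms by (intro finite_PiE) auto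
  show "finite {c :: 'i \<Rightarrow> 'a::{zero,finite}. \<forall>i. i \<notin> I \<longrightarrow> c i = 0}"
    unfolding eq using fin by (rule finite_imageI)
  have "card (PiE I (\<lambda>_. UNIV::'a set)) = card (UNIV::'a set) ^ card I"
    using assms by (simp add: card_PiE)
  then show "card {c :: 'i \<Rightarrow> 'a::{zero,finite}. \<forall>i. i \<notin> I \<longrightarrow> c i = 0} = card (UNIV::'a set) ^ card I"
    unfolding eq by (simp add: card_image[OF inj])
qed


lemma sum_fun_app: "(\<Sum>j\<in>J. g j) x = (\<Sum>j\<in>J. g j x)"
  by (induct J rule: infinite_finite_induct) auto

definition ind :: "nat set \<Rightarrow> nat \<Rightarrow> 'a::field" where
  "ind S = (\<lambda>i. if i \<in> S then 1 else 0)"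

lemma Delta_eq:
  assumes "X \<subseteq> {1..m}"
  shows "Delta m X = (ind ` Pow X :: (nat \<Rightarrow> 'a::field) set)"
proof (intro set_eqI iffI)
  fix w :: "nat \<Rightarrow> 'a" assume w: "w \<in> Delta m X"
  have "w = ind {i. w i \<noteq> 0}"
  proof
    fix i show "w i = ind {i. w i \<noteq> 0} i" using w by (auto simp: Delta_def ind_def)
  qed
  moreover have "{i. w i \<noteq> 0} \<in> Pow X" using w by (auto simp: Delta_def)
  ultimately show "w \<in> ind ` Pow X" by blast
next
  fix w :: "nat \<Rightarrow> 'a" assume "w \<in> ind ` Pow X"
  then obtain S where S: "S \<subseteq> X" "w = ind S" by auto
  then show "w \<in> Delta m X" using assms by (auto simp: Delta_def ind_def fvec_def)
qed

lemma card_Delta: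
  assumes "X \<subseteq> {1..m}"
  shows "card (Delta m X :: (nat \<Rightarrow> 'a::field) set) = 2 ^ card X"
proof -
  have fin: "finite X" using assms finite_subset by blast
  have "inj_on (ind :: nat set \<Rightarrow> nat \<Rightarrow> 'a) (Pow X)"
  proof (rule inj_onI)
    fix S T assume "(ind S :: nat \<Rightarrow> 'a) = ind T"
    hence "\<And>i. (i \<in> S) = (i \<in> T)" unfolding ind_def by (metis one_neq_zero)
    thus "S = T" by blast
  qed
  thus ?thesis using fin by (simp add: Delta_eq[OF assms] card_image card_Pow)
qed


definition T3 :: "nat \<Rightarrow> 'a::field \<Rightarrow> 'a \<Rightarrow> 'a \<Rightarrow> nat set \<Rightarrow> nat set \<Rightarrow> nat set \<Rightarrow> (nat \<Rightarrow> 'a) set" where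
  "T3 m p q r X Y Z = {(\<lambda>i. p * a i + q * b i + r * c i) | a b c. a \<in> Delta m X \<and> b \<in> Delta m Y \<and> c \<in> Delta m Z}"

lemma T3_swap12: "T3 m p q r X Y Z = T3 m q p r Y X Z"
  unfolding T3_def by (auto simp: algebra_simps)

lemma T3_swap23: "T3 m p q r X Y Z = T3 m p r q X Z Y"
  unfolding T3_def by (auto simp: algebra_simps)

lemma ind_Delta: "S \<subseteq> X \<Longrightarrow> X \<subseteq> {1..m} \<Longrightarrow> ind S \<in> Delta m X"
  using Delta_eq by blast

lemma zero_Delta: "X \<subseteq> {1..m} \<Longrightarrow> (\<lambda>_. 0) \<in> Delta m X"
  using ind_Delta[of "{}" X m] by (simp add: ind_def)

lemma Delta_vals: "w \<in> Delta m X \<Longrightarrow> w i \<in> {0,1}"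
  by (auto simp: Delta_def)

lemma Delta_out: "w \<in> Delta m X \<Longrightarrow> i \<notin> X \<Longrightarrow> w i = 0"
  by (auto simp: Delta_def)

lemma T3I: "a \<in> Delta m X \<Longrightarrow> b \<in> Delta m Y \<Longrightarrow> c \<in> Delta m Z \<Longrightarrow>
  (\<lambda>i. p * a i + q * b i + r * c i) \<in> T3 m p q r X Y Z"
  unfolding T3_def by blast

lemma T3_excl1:
  assumes X: "X \<subseteq> {1..m}" and i: "i \<in> X" "i \<notin> Y" "i \<notin> Z"
    and Y: "Y \<subseteq> {1..m}" and Z: "Z \<subseteq> {1..m}"
  shows "(\<lambda>d. d i) ` T3 m p q r X Y Z = {0, p}"
proof
  show "(\<lambda>d. d i) ` T3 m p q r X Y Z \<subseteq> {0, p}"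
  proof
    fix x assume "x \<in> (\<lambda>d. d i) ` T3 m p q r X Y Z"
    then obtain a b c :: "nat \<Rightarrow> 'a" where "a \<in> Delta m X" "b \<in> Delta m Y" "c \<in> Delta m Z"
      and x: "x = p * a i + q * b i + r * c i" unfolding T3_def by blast
    then have "a i \<in> {0,1}" "b i = 0" "c i = 0"
      using Delta_vals[of a m X i] Delta_out[of b m Y i] Delta_out[of c m Z i] i by auto
    then show "x \<in> {0,p}" using x by auto
  qed
next
  have z: "(\<lambda>k. p * (\<lambda>_. 0) k + q * (\<lambda>_. 0) k + r * (\<lambda>_. 0) k) \<in> T3 m p q r X Y Z"
    by (rule T3I[OF zero_Delta[OF X] zero_Delta[OF Y] zero_Delta[OF Z]])
  have w: "(\<lambda>k. p * ind {i} k + q * (\<lambda>_. 0) k + r * (\<lambda>_. 0) k) \<in> T3 m p q r X Y Z"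
    by (rule T3I[OF ind_Delta[of "{i}" X m] zero_Delta[OF Y] zero_Delta[OF Z]]) (use i X in auto)
  have "0 \<in> (\<lambda>d. d i) ` T3 m p q r X Y Z" by (rule rev_image_eqI[OF z]) simp
  moreover have "p \<in> (\<lambda>d. d i) ` T3 m p q r X Y Z" by (rule rev_image_eqI[OF w]) (simp add: ind_def)
  ultimately show "{0, p} \<subseteq> (\<lambda>d. d i) ` T3 m p q r X Y Z" by blast
qed

lemma T3_excl2:
  assumes X: "X \<subseteq> {1..m}" and i: "i \<in> X" "i \<notin> Y" "i \<notin> Z"
    and Y: "Y \<subseteq> {1..m}" and j: "j \<in> Y" "j \<notin> X" "j \<notin> Z" and Z: "Z \<subseteq> {1..m}"
  shows "(\<lambda>d. d i + d j) ` T3 m p q r X Y Z = {0, p, q, p + q}"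
proof
  show "(\<lambda>d. d i + d j) ` T3 m p q r X Y Z \<subseteq> {0, p, q, p + q}"
  proof
    fix x assume "x \<in> (\<lambda>d. d i + d j) ` T3 m p q r X Y Z"
    then obtain a b c :: "nat \<Rightarrow> 'a" where "a \<in> Delta m X" "b \<in> Delta m Y" "c \<in> Delta m Z"
      and x: "x = p * a i + q * b i + r * c i + (p * a j + q * b j + r * c j)" unfolding T3_def by blast
    then have "a i \<in> {0,1}" "b i = 0" "c i = 0" "a j = 0" "b j \<in> {0,1}" "c j = 0"
      using Delta_vals[of a m X i] Delta_out[of b m Y i] Delta_out[of c m Z i] i
        Delta_out[of a m X j] Delta_vals[of b m Y j] Delta_out[of c m Z j] j by auto
    then show "x \<in> {0,p,q,p+q}" using x by auto
  qed
next
  have mem: "\<And>x y. x \<subseteq> {i} \<Longrightarrow> y \<subseteq> {j} \<Longrightarrow>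
     (\<lambda>k. p * ind x k + q * ind y k + r * (\<lambda>_. 0) k) \<in> T3 m p q r X Y Z"
  proof -
    fix x y assume "x \<subseteq> {i}" "y \<subseteq> {j}"
    hence "x \<subseteq> X" "y \<subseteq> Y" using i j by auto
    hence "ind x \<in> Delta m X" "ind y \<in> Delta m Y" using ind_Delta X Y by auto
    thus "(\<lambda>k. p * ind x k + q * ind y k + r * (\<lambda>_. 0) k) \<in> T3 m p q r X Y Z"
      by (rule T3I[OF _ _ zero_Delta[OF Z]])
  qed
  have ij: "i \<noteq> j" using i j by blast
  have "0 \<in> (\<lambda>d. d i + d j) ` T3 m p q r X Y Z" by (rule rev_image_eqI[OF mem[of "{}" "{}"]]) (auto simp: ind_def)
  moreover have "p \<in> (\<lambda>d. d i + d j) ` T3 m p q r X Y Z" by (rule rev_image_eqI[OF mem[of "{i}" "{}"]]) (use ij in \<open>auto simp: ind_def\<close>)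
  moreover have "q \<in> (\<lambda>d. d i + d j) ` T3 m p q r X Y Z" by (rule rev_image_eqI[OF mem[of "{}" "{j}"]]) (use ij in \<open>auto simp: ind_def\<close>)
  moreover have "p + q \<in> (\<lambda>d. d i + d j) ` T3 m p q r X Y Z" by (rule rev_image_eqI[OF mem[of "{i}" "{j}"]]) (use ij in \<open>auto simp: ind_def\<close>)
  ultimately show "{0, p, q, p + q} \<subseteq> (\<lambda>d. d i + d j) ` T3 m p q r X Y Z" by blast
qed


lemma dotp_diff_right: "dotp m v (x - y) = dotp m v x - dotp m v y"
  unfolding dotp_def by (simp add: right_diff_distrib sum_subtractf)

lemma dotp_add_left: "dotp m (v + w) d = dotp m v d + dotp m w d"
  unfolding dotp_def by (simp add: distrib_right sum.distrib)

lemma dotp_diff_left: "dotp m (v - w) d = dotp m v d - dotp m w d"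
  unfolding dotp_def by (simp add: left_diff_distrib sum_subtractf)

lemma dotp_scale_left: "dotp m (fscale a v) d = a * dotp m v d"
  unfolding dotp_def fscale_def by (simp add: sum_distrib_left mult.assoc)

lemma dotp_zero_left: "dotp m 0 d = 0"
  unfolding dotp_def by simp

lemma dotp_ind: "S \<subseteq> {1..m} \<Longrightarrow> dotp m (ind S) d = sum d S"
proof -
  assume S: "S \<subseteq> {1..m}"
  have "dotp m (ind S) d = (\<Sum>i\<in>{1..m}. if i \<in> S then d i else 0)"
    unfolding dotp_def ind_def by (intro sum.cong) auto
  also have "\<dots> = sum d ({1..m} \<inter> S)" by (simp add: sum.inter_restrict)
  also have "{1..m} \<inter> S = S" using S by blast
  finally show ?thesis .
qed

lemma ind_fvec: "S \<subseteq> {1..m} \<Longrightarrow> ind S \<in> fvec m"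
  unfolding ind_def fvec_def by auto

lemma ind_ne0: "S \<noteq> {} \<Longrightarrow> (ind S :: nat \<Rightarrow> 'a::field) \<noteq> 0"
proof
  assume "S \<noteq> {}" "(ind S :: nat \<Rightarrow> 'a) = 0"
  then obtain i where "i \<in> S" "(ind S :: nat \<Rightarrow> 'a) i = 0" by (metis all_not_in_conv zero_fun_def)
  thus False unfolding ind_def by simp
qed

lemma card_split: "finite A \<Longrightarrow> card {x\<in>A. P x} + card {x\<in>A. \<not> P x} = card A"
proof -
  assume "finite A"
  moreover have "A = {x\<in>A. P x} \<union> {x\<in>A. \<not> P x}" by blast
  ultimately show ?thesis by (metis (no_types, lifting) card_Un_disjoint finite_Un disjoint_iff mem_Collect_eq)
qed

lemma indep_crit:
  assumes "finite (B :: ((nat\<Rightarrow>'a::field)\<Rightarrow>'a) set)"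
    and "\<And>g. sum (\<lambda>y. fscale (g y) y) B = 0 \<Longrightarrow> \<forall>x\<in>B. g x = 0"
  shows "fvs.independent B"
  apply (rule fvs.independent_if_scalars_zero)
   apply (rule assms(1))
  using assms(2) apply blast
  done

locale cs =
  fixes \<omega> :: "'a::{field,finite}" and m :: nat and L M N :: "nat set"
  assumes card8: "card (UNIV :: 'a set) = 8"
    and root: "\<omega>^3 + \<omega> + 1 = 0"
    and LMN: "L \<noteq> {}" "M \<noteq> {}" "N \<noteq> {}"
    and proper: "L \<union> M \<union> N \<subset> {1..m}"
    and two: "(L - (M \<union> N) \<noteq> {} \<and> M - (N \<union> L) \<noteq> {}) \<or>
              (M - (N \<union> L) \<noteq> {} \<and> N - (L \<union> M) \<noteq> {}) \<or>
              (L - (M \<union> N) \<noteq> {} \<and> N - (L \<union> M) \<noteq> {})"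
begin

lemma c2: "(1::'a) + 1 = 0" using char2[OF card8] .

lemma add_self: "(x::'a) + x = 0"
proof -
  have "x + x = x * (1 + 1)" by (simp add: algebra_simps)
  thus ?thesis using c2 by simp
qed

lemma minus_eq_plus: "(x::'a) - y = x + y"
proof -
  have "y + y = 0" by (rule add_self)
  hence "- y = y" by (metis add_eq_0_iff)
  thus ?thesis by (metis diff_conv_add_uminus)
qed

lemma uminus_eq: "- (x::'a) = x"
  using minus_eq_plus[of 0 x] by simp

lemma w3: "\<omega>^3 = \<omega> + 1"
proof -
  have "\<omega>^3 = \<omega>^3 + (\<omega> + 1) + (\<omega> + 1)" using add_self[of "\<omega>+1"] by (simp add: algebra_simps)
  also have "\<dots> = \<omega> + 1" using root by (simp add: algebra_simps)
  finally show ?thesis .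
qed

lemma w_ne0: "\<omega> \<noteq> 0" using root by auto
lemma w_ne1: "\<omega> \<noteq> 1"
proof
  assume "\<omega> = 1" hence "(1::'a) + 1 + 1 = 0" using root by simp
  moreover have "(1::'a) + 1 + 1 = 1" by (simp only: c2 add_0_left)
  ultimately show False by simp
qed
lemma w2_ne1: "\<omega>^2 \<noteq> 1"
proof
  assume h: "\<omega>^2 = 1"
  have "\<omega>^3 = \<omega> * \<omega>^2" by (simp add: power_numeral_reduce)
  hence "\<omega> + 1 = \<omega>" using h w3 by simp
  thus False by simp
qed
lemma w2_ne: "\<omega>^2 \<noteq> \<omega> + 1"
proof
  assume h: "\<omega>^2 = \<omega> + 1"
  have "\<omega>^3 = \<omega> * \<omega>^2" by (simp add: power_numeral_reduce)
  also have "\<dots> = \<omega>^2 + \<omega>" using h by (simp add: algebra_simps power2_eq_square)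
  also have "\<dots> = \<omega> + \<omega> + 1" using h by simp
  also have "\<dots> = 1" using add_self by simp
  finally have "\<omega> = 0" using w3 by simp
  thus False using w_ne0 by simp
qed
lemma w2_ne_w: "\<omega>^2 \<noteq> \<omega>"
  using w_ne0 w_ne1 by (simp add: power2_eq_square)
lemma w2_ne0: "\<omega>^2 \<noteq> 0" using w_ne0 by simp

lemma indep:
  assumes "a \<in> {0,1}" "b \<in> {0,1}" "c \<in> {0,1}" "a + \<omega>*b + \<omega>^2*c = 0"
  shows "a = 0 \<and> b = 0 \<and> c = 0"
proof -
  have e1: "\<And>x y::'a. x + y = 0 \<Longrightarrow> x = y" by (metis add_self add_left_cancel)
  show ?thesis using assms
    apply (elim insertE emptyE; simp)
    using w_ne0 w2_ne0 w_ne1 w2_ne1 w2_ne_w w2_ne e1 c2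
    by (metis add.commute add.assoc)+
qed


definition "VV = (fvec m :: (nat \<Rightarrow> 'a) set)"
definition "DD = sumset3 \<omega> (Delta m L) (Delta m M) (Delta m N)"
definition "DDc = VV - DD"
definition "UU = L \<union> M \<union> N"
definition "ss = card L + card M + card N"
definition "cw v = (\<lambda>d. if d \<in> DDc then dotp m v d else 0)"

lemma subs: "L \<subseteq> {1..m}" "M \<subseteq> {1..m}" "N \<subseteq> {1..m}" "UU \<subseteq> {1..m}"
  using proper by (auto simp: UU_def)

lemma fins: "finite L" "finite M" "finite N" "finite UU"
  using subs finite_subset by blast+

lemma DD_T3: "DD = T3 m 1 \<omega> (\<omega>^2) L M N"
  unfolding DD_def T3_def sumset3_def by simp

lemma finV: "finite VV" and cardV: "card VV = 8 ^ m"
  using finite_supp_funs[of "{1..m}", where 'a='a] card8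
  unfolding VV_def fvec_def by auto

lemma DD_sub: "DD \<subseteq> VV"
  unfolding DD_def sumset3_def VV_def fvec_def Delta_def by auto

lemma Delta_diff: "a \<in> Delta m X \<Longrightarrow> b \<in> Delta m X \<Longrightarrow> (a - b :: nat \<Rightarrow> 'a) \<in> Delta m X"
proof -
  assume a: "a \<in> Delta m X" and b: "b \<in> Delta m X"
  have "(a - b) \<in> fvec m" using a b by (auto simp: Delta_def fvec_def)
  moreover have "\<forall>i. (a - b) i \<in> {0,1}"
  proof
    fix i show "(a - b) i \<in> {0,1}" using Delta_vals[OF a, of i] Delta_vals[OF b, of i] c2
      by (auto simp: minus_eq_plus)
  qed
  moreover have "{i. (a - b) i \<noteq> 0} \<subseteq> X"
  proof
    fix i assume "i \<in> {i. (a - b) i \<noteq> 0}"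
    hence "a i \<noteq> 0 \<or> b i \<noteq> 0" by auto
    thus "i \<in> X" using Delta_out[OF a] Delta_out[OF b] by blast
  qed
  ultimately show ?thesis unfolding Delta_def by blast
qed

lemma DD_diff: "x \<in> DD \<Longrightarrow> y \<in> DD \<Longrightarrow> x - y \<in> DD"
proof -
  assume "x \<in> DD" "y \<in> DD"
  then obtain a b c a' b' c' where
    x: "x = (\<lambda>i. a i + \<omega> * b i + \<omega>^2 * c i)" "a \<in> Delta m L" "b \<in> Delta m M" "c \<in> Delta m N" and
    y: "y = (\<lambda>i. a' i + \<omega> * b' i + \<omega>^2 * c' i)" "a' \<in> Delta m L" "b' \<in> Delta m M" "c' \<in> Delta m N"
    unfolding DD_def sumset3_def by blast
  have "x - y = (\<lambda>i. (a - a') i + \<omega> * (b - b') i + \<omega>^2 * (c - c') i)"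
    using x y by (simp add: fun_eq_iff algebra_simps)
  thus "x - y \<in> DD" unfolding DD_def sumset3_def using Delta_diff x y by blast
qed

lemma DD_out: "d \<in> DD \<Longrightarrow> j \<notin> UU \<Longrightarrow> d j = 0"
proof -
  assume "d \<in> DD" "j \<notin> UU"
  then obtain a b c where "d = (\<lambda>i. a i + \<omega> * b i + \<omega>^2 * c i)" "a \<in> Delta m L" "b \<in> Delta m M" "c \<in> Delta m N"
    "j \<notin> L" "j \<notin> M" "j \<notin> N"
    unfolding DD_def sumset3_def UU_def by blast
  thus "d j = 0" using Delta_out[of a m L j] Delta_out[of b m M j] Delta_out[of c m N j] by simp
qed

lemma card_DD: "card DD = 2 ^ ss"
proof -
  let ?f = "\<lambda>(a,b,c). (\<lambda>i. a i + \<omega> * b i + \<omega>^2 * c i) :: nat \<Rightarrow> 'a"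
  have eq: "DD = ?f ` (Delta m L \<times> Delta m M \<times> Delta m N)"
  proof
    show "DD \<subseteq> ?f ` (Delta m L \<times> Delta m M \<times> Delta m N)"
    proof
      fix d assume "d \<in> DD"
      then obtain a b c where "d = (\<lambda>i. a i + \<omega> * b i + \<omega>^2 * c i)" "a \<in> Delta m L" "b \<in> Delta m M" "c \<in> Delta m N"
        unfolding DD_def sumset3_def by blast
      thus "d \<in> ?f ` (Delta m L \<times> Delta m M \<times> Delta m N)"
        by (intro rev_image_eqI[of "(a,b,c)"]) auto
    qed
  next
    show "?f ` (Delta m L \<times> Delta m M \<times> Delta m N) \<subseteq> DD"
    proof clarify
      fix a b c :: "nat \<Rightarrow> 'a" assume "a \<in> Delta m L" "b \<in> Delta m M" "c \<in> Delta m N"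
      thus "(\<lambda>i. a i + \<omega> * b i + \<omega>^2 * c i) \<in> DD" using DD_T3 T3I[of a m L b M c N 1 \<omega> "\<omega>^2"] by simp
    qed
  qed
  have key: "a = a' \<and> b = b' \<and> c = c'"
    if a: "a \<in> Delta m L" "b \<in> Delta m M" "c \<in> Delta m N"
      "a' \<in> Delta m L" "b' \<in> Delta m M" "c' \<in> Delta m N"
      and e: "(\<lambda>i. a i + \<omega> * b i + \<omega>^2 * c i) = (\<lambda>i. a' i + \<omega> * b' i + \<omega>^2 * c' i)"
    for a b c a' b' c' :: "nat \<Rightarrow> 'a"
  proof -
    have "\<And>i. a i = a' i \<and> b i = b' i \<and> c i = c' i"
    proof -
      fix i
      have "(a - a') i + \<omega> * (b - b') i + \<omega>^2 * (c - c') i = 0"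
        using fun_cong[OF e, of i] by (simp add: algebra_simps)
      moreover have "(a - a') i \<in> {0,1}" "(b - b') i \<in> {0,1}" "(c - c') i \<in> {0,1}"
        using Delta_diff a Delta_vals by blast+
      ultimately have "(a - a') i = 0 \<and> (b - b') i = 0 \<and> (c - c') i = 0"
        using indep by blast
      thus "a i = a' i \<and> b i = b' i \<and> c i = c' i" by simp
    qed
    thus ?thesis by (simp add: fun_eq_iff)
  qed
  have inj: "inj_on ?f (Delta m L \<times> Delta m M \<times> Delta m N)"
    by (rule inj_onI) (use key in force)
  have "card DD = card (Delta m L :: (nat \<Rightarrow> 'a) set) * (card (Delta m M :: (nat \<Rightarrow> 'a) set) * card (Delta m N :: (nat \<Rightarrow> 'a) set))"
    unfolding eq by (simp add: card_image[OF inj] card_cartesian_product)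
  thus ?thesis unfolding ss_def
    using card_Delta[OF subs(1), where 'a='a] card_Delta[OF subs(2), where 'a='a] card_Delta[OF subs(3), where 'a='a]
    by (simp add: power_add)
qed


lemma VV_diff: "x \<in> VV \<Longrightarrow> y \<in> VV \<Longrightarrow> x - y \<in> VV"
  unfolding VV_def fvec_def by auto

lemma finDD: "finite DD" using finV DD_sub finite_subset by blast

lemma ss_ge3: "ss \<ge> 3"
proof -
  have "card L \<ge> 1" "card M \<ge> 1" "card N \<ge> 1" using LMN fins by (auto simp: Suc_le_eq card_gt_0_iff)
  thus ?thesis unfolding ss_def by simp
qed

lemma card_UU: "card UU < m"
proof -
  have "card UU < card {1..m}" using proper unfolding UU_def by (intro psubset_card_mono) auto
  thus ?thesis by simp
qed

lemma card_UU2: "card UU \<ge> 2"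
proof -
  obtain i j where "i \<in> UU" "j \<in> UU" "i \<noteq> j" using two unfolding UU_def by blast
  hence "{i,j} \<subseteq> UU" by auto
  hence "card {i,j} \<le> card UU" using fins(4) card_mono by blast
  thus ?thesis using \<open>i \<noteq> j\<close> by simp
qed

lemma m_ge3: "m \<ge> 3" using card_UU card_UU2 by simp

lemma ss_le: "ss \<le> 3 * (m - 1)"
proof -
  have "card L \<le> card UU" "card M \<le> card UU" "card N \<le> card UU"
    using fins(4) unfolding UU_def by (auto intro: card_mono)
  thus ?thesis using card_UU unfolding ss_def by linarith
qed

lemma kerV:
  assumes v: "v \<in> VV" "v \<noteq> 0"
  shows "card {d\<in>VV. dotp m v d = 0} * 8 = 8 ^ m"
proof -
  obtain j where j: "v j \<noteq> 0" using v(2) by (metis ext zero_fun_def)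
  have jm: "j \<in> {1..m}" using v(1) j unfolding VV_def fvec_def by blast
  have img: "dotp m v ` VV = UNIV"
  proof (rule set_eqI, rule iffI)
    fix x :: 'a
    let ?d = "\<lambda>k. if k = j then x / v j else 0"
    have "?d \<in> VV" using jm unfolding VV_def fvec_def by auto
    moreover have "dotp m v ?d = x"
    proof -
      have "dotp m v ?d = (\<Sum>k\<in>{1..m}. if k = j then v j * (x / v j) else 0)"
        unfolding dotp_def by (intro sum.cong) auto
      also have "\<dots> = x" using jm j by simp
      finally show ?thesis .
    qed
    ultimately show "x \<in> dotp m v ` VV" by (metis image_eqI)
  qed simp
  have "card VV = card (dotp m v ` VV) * card {d\<in>VV. dotp m v d = 0}"
    by (rule fiber_card[where f="dotp m v", OF finV VV_diff dotp_diff_right])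
  thus ?thesis using img card8 cardV by simp
qed

lemma imgD:
  "card (dotp m v ` DD) * card {d\<in>DD. dotp m v d = 0} = 2 ^ ss"
  "\<exists>i\<le>3. card (dotp m v ` DD) = 2 ^ i"
proof -
  have e: "card DD = card (dotp m v ` DD) * card {d\<in>DD. dotp m v d = 0}"
    by (rule fiber_card[where f="dotp m v", OF finDD DD_diff dotp_diff_right])
  thus "card (dotp m v ` DD) * card {d\<in>DD. dotp m v d = 0} = 2 ^ ss" using card_DD by simp
  hence "card (dotp m v ` DD) dvd 2 ^ ss" by (metis dvd_triv_left)
  then obtain i where i: "card (dotp m v ` DD) = 2 ^ i" using divides_primepow_nat[of 2] by auto
  have "card (dotp m v ` DD) \<le> card (UNIV :: 'a set)" by (rule card_mono) auto
  hence "(2::nat) ^ i \<le> 2 ^ 3" using i card8 by simp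
  hence "i \<le> 3" by (metis power_le_imp_le_exp one_less_numeral_iff semiring_norm(76))
  thus "\<exists>i\<le>3. card (dotp m v ` DD) = 2 ^ i" using i by blast
qed

lemma hwt_cw: "hwt DDc (cw v) = card {d\<in>DDc. dotp m v d \<noteq> 0}"
  unfolding hwt_def supp_def cw_def by (rule arg_cong[where f=card]) auto

lemma weight_eq:
  assumes v: "v \<in> VV" "v \<noteq> 0"
  shows "hwt DDc (cw v) + 2 ^ ss = 7 * 8 ^ (m - 1) + card {d\<in>DD. dotp m v d = 0}"
proof -
  let ?f = "dotp m v"
  have finDc: "finite DDc" unfolding DDc_def using finV by simp
  have "{d\<in>VV. ?f d \<noteq> 0} = {d\<in>DDc. ?f d \<noteq> 0} \<union> {d\<in>DD. ?f d \<noteq> 0}"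
    using DD_sub unfolding DDc_def by blast
  hence c1: "card {d\<in>VV. ?f d \<noteq> 0} = card {d\<in>DDc. ?f d \<noteq> 0} + card {d\<in>DD. ?f d \<noteq> 0}"
    using finDc finDD by (simp add: card_Un_disjoint disjoint_iff DDc_def)
  have c2': "card {d\<in>VV. ?f d = 0} + card {d\<in>VV. ?f d \<noteq> 0} = 8 ^ m"
    using card_split[OF finV, of "\<lambda>d. ?f d = 0"] cardV by simp
  have c3: "card {d\<in>DD. ?f d = 0} + card {d\<in>DD. ?f d \<noteq> 0} = 2 ^ ss"
    using card_split[OF finDD, of "\<lambda>d. ?f d = 0"] card_DD by simp
  have k: "card {d\<in>VV. ?f d = 0} * 8 = 8 ^ m" using kerV[OF v] .
  have m1: "(8::nat) ^ m = 8 * 8 ^ (m - 1)" using m_ge3 by (cases m) auto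
  have "card {d\<in>VV. ?f d = 0} = 8 ^ (m - 1)" using k m1 by simp
  thus ?thesis using c1 c2' c3 m1 hwt_cw[of v] by simp
qed


lemma DDI: "a \<in> Delta m L \<Longrightarrow> b \<in> Delta m M \<Longrightarrow> c \<in> Delta m N \<Longrightarrow>
  (\<lambda>i. a i + \<omega> * b i + \<omega>^2 * c i) \<in> DD"
  using T3I[of a m L b M c N 1 \<omega> "\<omega>^2"] DD_T3 by simp

lemma zero_DD: "(\<lambda>_. 0) \<in> DD"
  using DDI[OF zero_Delta[OF subs(1)] zero_Delta[OF subs(2)] zero_Delta[OF subs(3)]] by simp

abbreviation "AA \<equiv> (2::nat) ^ (3 * (m - 1))"
abbreviation "BB \<equiv> (2::nat) ^ (ss - 3)"

lemma AA_eq: "(8::nat) ^ (m - 1) = AA"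
  by (simp add: power_mult)

lemma BB_eq: "(2::nat) ^ ss = 8 * BB"
proof -
  have "ss = 3 + (ss - 3)" using ss_ge3 by simp
  hence "(2::nat) ^ ss = 2 ^ 3 * 2 ^ (ss - 3)" by (metis power_add)
  thus ?thesis by simp
qed

lemma AB: "8 * BB \<le> AA" "BB \<ge> 1"
proof -
  have "3 + (ss - 3) \<le> 3 * (m - 1)" using ss_le ss_ge3 m_ge3 by linarith
  hence "(2::nat) ^ (3 + (ss - 3)) \<le> 2 ^ (3 * (m - 1))" by (rule power_increasing) simp
  thus "8 * BB \<le> AA" by (simp add: power_add)
  show "BB \<ge> 1" by simp
qed

lemma wt_img:
  assumes v: "v \<in> VV" "v \<noteq> 0"
  shows "card (dotp m v ` DD) = 1 \<Longrightarrow> hwt DDc (cw v) = 7 * AA"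
    and "card (dotp m v ` DD) = 2 \<Longrightarrow> hwt DDc (cw v) = 7 * AA - 4 * BB"
    and "card (dotp m v ` DD) = 4 \<Longrightarrow> hwt DDc (cw v) = 7 * AA - 6 * BB"
    and "card (dotp m v ` DD) = 8 \<Longrightarrow> hwt DDc (cw v) = 7 * AA - 7 * BB"
  using weight_eq[OF v] imgD(1)[of v] BB_eq AA_eq by auto

lemma wt_in:
  assumes v: "v \<in> VV" "v \<noteq> 0"
  shows "hwt DDc (cw v) \<in> {7 * AA - 7 * BB, 7 * AA - 6 * BB, 7 * AA - 4 * BB, 7 * AA}"
proof -
  obtain i where "i \<le> 3" "card (dotp m v ` DD) = 2 ^ i" using imgD(2)[of v] by blast
  moreover have "i = 0 \<or> i = 1 \<or> i = 2 \<or> i = 3" using \<open>i \<le> 3\<close> by arith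
  ultimately have "card (dotp m v ` DD) \<in> {1,2,4,8}" by auto
  thus ?thesis using wt_img[OF v] by auto
qed

lemma ex0: "\<exists>v\<in>VV. v \<noteq> 0 \<and> card (dotp m v ` DD) = 1"
proof -
  obtain j where j: "j \<in> {1..m}" "j \<notin> UU" using proper unfolding UU_def by blast
  let ?v = "ind {j} :: nat \<Rightarrow> 'a"
  have "?v \<in> VV" unfolding VV_def using j by (intro ind_fvec) auto
  moreover have "?v \<noteq> 0" by (rule ind_ne0) simp
  moreover have "dotp m ?v ` DD = {0}"
  proof
    have eqj: "\<And>d. dotp m ?v d = d j" using dotp_ind[of "{j}" m] j by simp
    show "dotp m ?v ` DD \<subseteq> {0}" using eqj j DD_out by auto
    show "{0} \<subseteq> dotp m ?v ` DD" using eqj by (auto intro!: rev_image_eqI[OF zero_DD])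
  qed
  ultimately show ?thesis by auto
qed

lemma ex12_gen:
  assumes DT: "DD = T3 m p q r X Y Z" and X: "X \<subseteq> {1..m}" and Y: "Y \<subseteq> {1..m}" and Z: "Z \<subseteq> {1..m}"
    and i: "i \<in> X" "i \<notin> Y" "i \<notin> Z" and j: "j \<in> Y" "j \<notin> X" "j \<notin> Z"
    and pq: "p \<noteq> 0" "q \<noteq> 0" "p \<noteq> q"
  shows "(\<exists>v\<in>VV. v \<noteq> 0 \<and> card (dotp m v ` DD) = 2) \<and> (\<exists>v\<in>VV. v \<noteq> 0 \<and> card (dotp m v ` DD) = 4)"
proof -
  have ij: "i \<noteq> j" using i j by blast
  have im: "i \<in> {1..m}" "j \<in> {1..m}" using i j X Y by blast+
  let ?v1 = "ind {i} :: nat \<Rightarrow> 'a"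
  let ?v2 = "ind {i,j} :: nat \<Rightarrow> 'a"
  have v1: "?v1 \<in> VV" "?v1 \<noteq> 0" unfolding VV_def using i X by (auto intro!: ind_fvec ind_ne0)
  have v2: "?v2 \<in> VV" "?v2 \<noteq> 0" unfolding VV_def using i j X Y by (auto intro!: ind_fvec ind_ne0)
  have "dotp m ?v1 ` DD = (\<lambda>d. d i) ` DD"
  proof -
    have "\<And>d. dotp m ?v1 d = d i" using dotp_ind[of "{i}" m] im by simp
    thus ?thesis by simp
  qed
  also have "\<dots> = {0, p}" unfolding DT by (rule T3_excl1[OF X i Y Z])
  finally have c1: "card (dotp m ?v1 ` DD) = 2" using pq by simp
  have "dotp m ?v2 ` DD = (\<lambda>d. d i + d j) ` DD"
  proof -
    have "\<And>d. dotp m ?v2 d = d i + d j" using dotp_ind[of "{i,j}" m] im ij by simp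
    thus ?thesis by simp
  qed
  also have "\<dots> = {0, p, q, p + q}" unfolding DT by (rule T3_excl2[OF X i Y j Z])
  finally have e2: "dotp m ?v2 ` DD = {0, p, q, p + q}" .
  have "p + q \<noteq> 0" using pq add_self by (metis add_left_cancel)
  moreover have "p + q \<noteq> p" "p + q \<noteq> q" using pq by auto
  ultimately have c2: "card (dotp m ?v2 ` DD) = 4" unfolding e2 using pq by auto
  show ?thesis using v1 v2 c1 c2 by blast
qed

lemma ex12: "(\<exists>v\<in>VV. v \<noteq> 0 \<and> card (dotp m v ` DD) = 2) \<and> (\<exists>v\<in>VV. v \<noteq> 0 \<and> card (dotp m v ` DD) = 4)"
proof -
  have T1: "DD = T3 m 1 \<omega> (\<omega>^2) L M N" by (rule DD_T3)
  have T2: "DD = T3 m \<omega> (\<omega>^2) 1 M N L" using DD_T3 T3_swap12 T3_swap23 by metis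
  have T3': "DD = T3 m 1 (\<omega>^2) \<omega> L N M" using DD_T3 T3_swap23 by metis
  from two show ?thesis
  proof (elim disjE conjE)
    assume "L - (M \<union> N) \<noteq> {}" "M - (N \<union> L) \<noteq> {}"
    then obtain i j where "i \<in> L - (M \<union> N)" "j \<in> M - (N \<union> L)" by blast
    thus ?thesis using ex12_gen[OF T1 subs(1) subs(2) subs(3), of i j] w_ne0 w_ne1 by auto
  next
    assume "M - (N \<union> L) \<noteq> {}" "N - (L \<union> M) \<noteq> {}"
    then obtain i j where "i \<in> M - (N \<union> L)" "j \<in> N - (L \<union> M)" by blast
    thus ?thesis using ex12_gen[OF T2 subs(2) subs(3) subs(1), of i j] w_ne0 w2_ne0 w2_ne_w by auto
  next
    assume "L - (M \<union> N) \<noteq> {}" "N - (L \<union> M) \<noteq> {}"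
    then obtain i j where "i \<in> L - (M \<union> N)" "j \<in> N - (L \<union> M)" by blast
    thus ?thesis using ex12_gen[OF T3' subs(1) subs(3) subs(2), of i j] w2_ne0 w2_ne1 by auto
  qed
qed

lemma minus_eq_plus01: "x \<in> {0,1} \<Longrightarrow> y \<in> {0,1} \<Longrightarrow> (x::'a) - y \<in> {0,1}"
proof -
  assume "x \<in> {0,1}" "y \<in> {0,1}"
  moreover have "(1::'a) - 1 = 0" by simp
  moreover have "(0::'a) - 1 = 1" using uminus_eq[of 1] by simp
  ultimately show ?thesis by auto
qed

lemma comb_surj: "\<exists>a b c. a \<in> {0,1} \<and> b \<in> {0,1} \<and> c \<in> {0,1} \<and> x = a + \<omega> * b + \<omega>^2 * c"
proof -
  let ?g = "\<lambda>(a,b,c). a + \<omega> * b + \<omega>^2 * c"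
  let ?S = "{0,1::'a} \<times> {0,1::'a} \<times> {0,1::'a}"
  have key: "a = a' \<and> b = b' \<and> c = c'"
    if s: "a \<in> {0,1}" "b \<in> {0,1}" "c \<in> {0,1}" "a' \<in> {0,1}" "b' \<in> {0,1}" "c' \<in> {0,1}"
      and e: "a + \<omega> * b + \<omega>^2 * c = a' + \<omega> * b' + \<omega>^2 * c'" for a b c a' b' c' :: 'a
  proof -
    have "(a - a') + \<omega> * (b - b') + \<omega>^2 * (c - c') = 0" using e by (simp add: algebra_simps)
    moreover have "a - a' \<in> {0,1}" "b - b' \<in> {0,1}" "c - c' \<in> {0,1}"
      using s by (simp_all only: minus_eq_plus01)
    ultimately have "a - a' = 0 \<and> b - b' = 0 \<and> c - c' = 0" using indep by blast
    thus ?thesis by simp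
  qed
  have inj: "inj_on ?g ?S"
  proof (rule inj_onI)
    fix x y assume xy: "x \<in> ?S" "y \<in> ?S" "?g x = ?g y"
    obtain a b c where x: "x = (a,b,c)" by (cases x) auto
    obtain a' b' c' where y: "y = (a',b',c')" by (cases y) auto
    have m: "a \<in> {0,1}" "b \<in> {0,1}" "c \<in> {0,1}" "a' \<in> {0,1}" "b' \<in> {0,1}" "c' \<in> {0,1}"
      using xy(1,2) unfolding x y by (simp_all only: mem_Times_iff fst_conv snd_conv)
    have e: "a + \<omega> * b + \<omega>^2 * c = a' + \<omega> * b' + \<omega>^2 * c'" using xy(3) unfolding x y by simp
    from key[OF m e] show "x = y" unfolding x y by simp
  qed
  have "card (?g ` ?S) = 8" using card_image[OF inj] by (simp add: card_cartesian_product)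
  hence "?g ` ?S = UNIV" using card8 by (metis card_subset_eq finite subset_UNIV)
  hence "x \<in> ?g ` ?S" by simp
  then obtain t where t: "t \<in> ?S" "x = ?g t" by blast
  obtain a b c where tt: "t = (a,b,c)" by (cases t) auto
  have "a \<in> {0,1}" "b \<in> {0,1}" "c \<in> {0,1}" using t(1) unfolding tt by (simp_all only: mem_Times_iff fst_conv snd_conv)
  moreover have "x = a + \<omega> * b + \<omega>^2 * c" using t(2) unfolding tt by simp
  ultimately show ?thesis by blast
qed

lemma single_Delta: "l \<in> X \<Longrightarrow> X \<subseteq> {1..m} \<Longrightarrow> a \<in> {0,1} \<Longrightarrow> (\<lambda>k. if k = l then a else 0) \<in> Delta m X"
  unfolding Delta_def fvec_def by auto

lemma ex3: "\<exists>v\<in>VV. v \<noteq> 0 \<and> card (dotp m v ` DD) = 8"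
proof -
  let ?v = "ind UU :: nat \<Rightarrow> 'a"
  have v1: "?v \<in> VV" unfolding VV_def by (rule ind_fvec[OF subs(4)])
  have v2: "?v \<noteq> 0" by (rule ind_ne0) (use LMN in \<open>auto simp: UU_def\<close>)
  obtain l n1 n2 where l: "l \<in> L" "n1 \<in> M" "n2 \<in> N" using LMN by blast
  have lU: "l \<in> UU" "n1 \<in> UU" "n2 \<in> UU" using l unfolding UU_def by auto
  have surj: "x \<in> dotp m ?v ` DD" for x :: 'a
  proof -
    obtain a b c where abc: "a \<in> {0,1}" "b \<in> {0,1}" "c \<in> {0,1}" "x = a + \<omega> * b + \<omega>^2 * c"
      using comb_surj by blast
    define A where "A = (\<lambda>k. if k = l then a else 0)"
    define B where "B = (\<lambda>k. if k = n1 then b else 0)"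
    define C where "C = (\<lambda>k. if k = n2 then c else 0)"
    have d: "(\<lambda>i. A i + \<omega> * B i + \<omega>^2 * C i) \<in> DD"
      unfolding A_def B_def C_def
      by (rule DDI[OF single_Delta[OF l(1) subs(1) abc(1)] single_Delta[OF l(2) subs(2) abc(2)]
          single_Delta[OF l(3) subs(3) abc(3)]])
    have "dotp m ?v (\<lambda>i. A i + \<omega> * B i + \<omega>^2 * C i) = (\<Sum>i\<in>UU. A i + \<omega> * B i + \<omega>^2 * C i)"
      by (rule dotp_ind[OF subs(4)])
    also have "\<dots> = sum A UU + \<omega> * sum B UU + \<omega>^2 * sum C UU"
      by (simp add: sum.distrib sum_distrib_left)
    also have "\<dots> = x"
    proof -
      have "sum A UU = a" "sum B UU = b" "sum C UU = c" unfolding A_def B_def C_def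
        using lU fins(4) by (simp_all only: sum.delta if_True)
      thus ?thesis using abc(4) by simp
    qed
    finally have "dotp m ?v (\<lambda>i. A i + \<omega> * B i + \<omega>^2 * C i) = x" .
    thus ?thesis using rev_image_eqI[OF d, of x "dotp m ?v"] by simp
  qed
  have "dotp m ?v ` DD = UNIV" using surj by blast
  hence "card (dotp m ?v ` DD) = 8" using card8 by simp
  with v1 v2 show ?thesis by blast
qed


lemma codeP_eq: "codeP m DDc = cw ` VV"
  unfolding codeP_def cw_def VV_def by auto

lemma cw_zero: "cw 0 = 0"
  unfolding cw_def by (simp add: dotp_zero_left fun_eq_iff)

lemma cw_add: "cw (v + w) = cw v + cw w"
  unfolding cw_def by (simp add: dotp_add_left fun_eq_iff)

lemma cw_diff: "cw (v - w) = cw v - cw w"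
  unfolding cw_def by (simp add: dotp_diff_left fun_eq_iff)

lemma cw_scale: "cw (fscale a v) = fscale a (cw v)"
  unfolding cw_def fscale_def by (simp add: dotp_scale_left[unfolded fscale_def] fun_eq_iff)

lemma W_pos: "7 * AA - 7 * BB > 0"
proof -
  have "BB < AA" using AB by linarith
  thus ?thesis by linarith
qed

lemma cw_nz: assumes "v \<in> VV" "v \<noteq> 0" shows "cw v \<noteq> 0"
proof
  assume "cw v = 0"
  hence "hwt DDc (cw v) = 0" unfolding hwt_def supp_def by simp
  moreover have "hwt DDc (cw v) \<ge> 7 * AA - 7 * BB" using wt_in[OF assms] by auto
  ultimately show False using W_pos by simp
qed

lemma nzw: "nonzero_weights DDc (codeP m DDc) = {7 * AA - 7 * BB, 7 * AA - 6 * BB, 7 * AA - 4 * BB, 7 * AA}"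
proof
  show "nonzero_weights DDc (codeP m DDc) \<subseteq> {7 * AA - 7 * BB, 7 * AA - 6 * BB, 7 * AA - 4 * BB, 7 * AA}"
  proof
    fix w assume "w \<in> nonzero_weights DDc (codeP m DDc)"
    then obtain v where v: "v \<in> VV" "cw v \<noteq> 0" "w = hwt DDc (cw v)"
      unfolding nonzero_weights_def codeP_eq by auto
    have "v \<noteq> 0" using v(2) cw_zero by auto
    thus "w \<in> {7 * AA - 7 * BB, 7 * AA - 6 * BB, 7 * AA - 4 * BB, 7 * AA}" using wt_in v by simp
  qed
next
  have mem: "hwt DDc (cw v) \<in> nonzero_weights DDc (codeP m DDc)" if "v \<in> VV" "v \<noteq> 0" for v
    unfolding nonzero_weights_def codeP_eq using that cw_nz by blast
  obtain v0 where "v0 \<in> VV" "v0 \<noteq> 0" "card (dotp m v0 ` DD) = 1" using ex0 by blast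
  hence 0: "7 * AA \<in> nonzero_weights DDc (codeP m DDc)" using mem wt_img by metis
  obtain v1 where "v1 \<in> VV" "v1 \<noteq> 0" "card (dotp m v1 ` DD) = 2" using ex12 by blast
  hence 1: "7 * AA - 4 * BB \<in> nonzero_weights DDc (codeP m DDc)" using mem wt_img by metis
  obtain v2 where "v2 \<in> VV" "v2 \<noteq> 0" "card (dotp m v2 ` DD) = 4" using ex12 by blast
  hence 2: "7 * AA - 6 * BB \<in> nonzero_weights DDc (codeP m DDc)" using mem wt_img by metis
  obtain v3 where "v3 \<in> VV" "v3 \<noteq> 0" "card (dotp m v3 ` DD) = 8" using ex3 by blast
  hence 3: "7 * AA - 7 * BB \<in> nonzero_weights DDc (codeP m DDc)" using mem wt_img by metis
  show "{7 * AA - 7 * BB, 7 * AA - 6 * BB, 7 * AA - 4 * BB, 7 * AA} \<subseteq> nonzero_weights DDc (codeP m DDc)"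
    using 0 1 2 3 by blast
qed

lemma Wlt: "7 * AA - 7 * BB < 7 * AA - 6 * BB" "7 * AA - 6 * BB < 7 * AA - 4 * BB" "7 * AA - 4 * BB < 7 * AA"
proof -
  have "BB < AA" "BB \<ge> 1" using AB by linarith+
  thus "7 * AA - 7 * BB < 7 * AA - 6 * BB" "7 * AA - 6 * BB < 7 * AA - 4 * BB" "7 * AA - 4 * BB < 7 * AA"
    by linarith+
qed

lemma card4_gen: "(a::nat) < b \<Longrightarrow> b < c \<Longrightarrow> c < d \<Longrightarrow> card {a,b,c,d} = 4"
  by simp

lemma card4: "card {7 * AA - 7 * BB, 7 * AA - 6 * BB, 7 * AA - 4 * BB, 7 * AA} = 4"
  by (rule card4_gen[OF Wlt])

lemma mind: "min_dist DDc (codeP m DDc) = 7 * AA - 7 * BB"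
  unfolding min_dist_def nzw
proof (rule Min_eqI)
  fix y assume "y \<in> {7 * AA - 7 * BB, 7 * AA - 6 * BB, 7 * AA - 4 * BB, 7 * AA}"
  thus "7 * AA - 7 * BB \<le> y" using Wlt by auto
qed auto

lemma finDc: "finite DDc" unfolding DDc_def using finV by simp

lemma cardDc: "card DDc = 2 ^ (3 * m) - 2 ^ ss"
proof -
  have "card DDc = card VV - card DD" unfolding DDc_def by (rule card_Diff_subset[OF finDD DD_sub])
  moreover have "(8::nat) ^ m = 2 ^ (3 * m)" by (simp add: power_mult)
  ultimately show ?thesis using cardV card_DD by simp
qed

lemma lin: "is_linear_code DDc (codeP m DDc)"
  unfolding is_linear_code_def
proof (intro conjI)
  show "finite DDc" by (rule finDc)
  show "codeP m DDc \<subseteq> words DDc" unfolding codeP_eq words_def cw_def by auto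
  show "fvs.subspace (codeP m DDc)"
    unfolding fvs.subspace_def codeP_eq
  proof (intro conjI ballI allI)
    have "0 \<in> VV" unfolding VV_def fvec_def by simp
    thus "0 \<in> cw ` VV" using cw_zero by (intro rev_image_eqI) auto
  next
    fix x y assume "x \<in> cw ` VV" "y \<in> cw ` VV"
    then obtain v w where "v \<in> VV" "w \<in> VV" "x = cw v" "y = cw w" by auto
    moreover have "v + w \<in> VV" using \<open>v \<in> VV\<close> \<open>w \<in> VV\<close> unfolding VV_def fvec_def by auto
    ultimately show "x + y \<in> cw ` VV" using cw_add by (intro rev_image_eqI[of "v + w"]) auto
  next
    fix c x assume "x \<in> cw ` VV"
    then obtain v where "v \<in> VV" "x = cw v" by auto
    moreover have "fscale c v \<in> VV" using \<open>v \<in> VV\<close> unfolding VV_def fvec_def fscale_def by auto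
    ultimately show "fscale c x \<in> cw ` VV" using cw_scale by (intro rev_image_eqI[of "fscale c v"]) auto
  qed
qed

lemma cw_decomp: "v \<in> VV \<Longrightarrow> cw v = (\<Sum>j\<in>{1..m}. fscale (v j) (cw (ind {j})))"
proof -
  assume v: "v \<in> VV"
  show ?thesis
  proof
    fix d
    have "(\<Sum>j\<in>{1..m}. fscale (v j) (cw (ind {j}))) d = (\<Sum>j\<in>{1..m}. v j * cw (ind {j}) d)"
      by (simp add: sum_fun_app fscale_def)
    also have "\<dots> = (if d \<in> DDc then (\<Sum>j\<in>{1..m}. v j * d j) else 0)"
    proof -
      have e: "\<And>j. j \<in> {1..m} \<Longrightarrow> dotp m (ind {j} :: nat \<Rightarrow> 'a) d = d j"
        by (subst dotp_ind) auto
      show ?thesis unfolding cw_def using e by (auto intro!: sum.cong)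
    qed
    also have "\<dots> = cw v d" unfolding cw_def dotp_def by simp
    finally show "cw v d = (\<Sum>j\<in>{1..m}. fscale (v j) (cw (ind {j}))) d" by simp
  qed
qed

lemma cw_inj: "v \<in> VV \<Longrightarrow> w \<in> VV \<Longrightarrow> cw v = cw w \<Longrightarrow> v = w"
proof (rule ccontr)
  assume "v \<in> VV" "w \<in> VV" "cw v = cw w" "v \<noteq> w"
  hence "v - w \<in> VV" "v - w \<noteq> 0" "cw (v - w) = 0" using VV_diff cw_diff by auto
  thus False using cw_nz by blast
qed

lemma dimC: "code_dim (codeP m DDc) = m"
proof -
  let ?e = "\<lambda>j. cw (ind {j})"
  let ?B = "?e ` {1..m}"
  have indV: "j \<in> {1..m} \<Longrightarrow> (ind {j} :: nat \<Rightarrow> 'a) \<in> VV" for j unfolding VV_def by (rule ind_fvec) auto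
  have inj: "inj_on ?e {1..m}"
  proof (rule inj_onI)
    fix i j assume ij: "i \<in> {1..m}" "j \<in> {1..m}" "?e i = ?e j"
    hence "(ind {i} :: nat \<Rightarrow> 'a) = ind {j}" using cw_inj indV by blast
    hence "(ind {i} :: nat \<Rightarrow> 'a) i = ind {j} i" by (rule fun_cong)
    hence "(1::'a) = (if i \<in> {j} then 1 else 0)" unfolding ind_def by simp
    thus "i = j" by (cases "i = j") auto
  qed
  show ?thesis unfolding code_dim_def
  proof (rule fvs.dim_unique[of ?B])
    show "?B \<subseteq> codeP m DDc" unfolding codeP_eq using indV by auto
    show "codeP m DDc \<subseteq> fvs.span ?B"
    proof
      fix x assume "x \<in> codeP m DDc"
      then obtain v where v: "v \<in> VV" "x = cw v" unfolding codeP_eq by auto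
      have "(\<Sum>j\<in>{1..m}. fscale (v j) (cw (ind {j}))) \<in> fvs.span ?B"
        by (intro fvs.span_sum fvs.span_scale fvs.span_base) auto
      thus "x \<in> fvs.span ?B" using cw_decomp[OF v(1)] v(2) by simp
    qed
    show "fvs.independent ?B"
    proof (rule indep_crit)
      show "finite ?B" by simp
      fix f assume s: "sum (\<lambda>y. fscale (f y) y) ?B = 0"
      define w where "w = (\<lambda>k. if k \<in> {1..m} then f (?e k) else (0::'a))"
      have wV: "w \<in> VV" unfolding w_def VV_def fvec_def by auto
      have "cw w = (\<Sum>j\<in>{1..m}. fscale (w j) (?e j))" by (rule cw_decomp[OF wV])
      also have "\<dots> = (\<Sum>j\<in>{1..m}. fscale (f (?e j)) (?e j))" unfolding w_def by (intro sum.cong) auto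
      also have "\<dots> = (\<Sum>x\<in>?B. fscale (f x) x)" by (rule sum.reindex[OF inj, symmetric, unfolded comp_def])
      also have "\<dots> = 0" by (rule s)
      finally have "w = 0" using cw_nz wV by blast
      hence w0: "w j = 0" for j by simp
      show "\<forall>x\<in>?B. f x = 0"
      proof
        fix x assume "x \<in> ?B"
        then obtain j where j: "j \<in> {1..m}" "x = ?e j" by auto
        have "w j = f x" unfolding w_def using j by simp
        thus "f x = 0" using w0[of j] by simp
      qed
    qed
    show "card ?B = m" using card_image[OF inj] by simp
  qed
qed

end


lemma divsum_shift: "(\<Sum>i<Suc n. (x::nat) div 8 ^ i) = x + (\<Sum>i<n. (x div 8) div 8 ^ i)"
proof -
  have "(\<Sum>i<Suc n. x div 8 ^ i) = x div 8 ^ 0 + (\<Sum>i<n. x div 8 ^ Suc i)"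
    by (rule sum.lessThan_Suc_shift)
  also have "(\<Sum>i<n. x div 8 ^ Suc i) = (\<Sum>i<n. (x div 8) div 8 ^ i)"
    by (intro sum.cong refl) (simp add: div_mult2_eq)
  finally show ?thesis by simp
qed

lemma divsum_small: "(y::nat) < 8 \<Longrightarrow> (\<Sum>i<n. y div 8 ^ i) = (if n = 0 then 0 else y)"
proof (cases n)
  case (Suc n')
  assume y: "y < 8"
  have "(\<Sum>i<n'. (y div 8) div 8 ^ i) = 0" using y by simp
  thus ?thesis using Suc divsum_shift[where n=n' and x=y] by simp
qed simp

lemma divsum: "7 * 2 ^ t < (8::nat) ^ n \<Longrightarrow> (\<Sum>i<n. (7 * 2 ^ t) div 8 ^ i) = (8 * 2 ^ t - 1 :: nat)"
proof (induction t arbitrary: n rule: less_induct)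
  case (less t)
  obtain n' where n: "n = Suc n'" using less.prems by (cases n) auto
  show ?case
  proof (cases "t \<ge> 3")
    case True
    have t: "(2::nat) ^ t = 8 * 2 ^ (t - 3)"
    proof -
      have "(2::nat) ^ t = 2 ^ (3 + (t - 3))" using True by simp
      thus ?thesis by (simp add: power_add)
    qed
    have d: "(7 * 2 ^ t) div 8 = (7 * 2 ^ (t - 3) :: nat)" using t by simp
    have "7 * 2 ^ (t - 3) < (8::nat) ^ n'" using less.prems n t by simp
    hence ih: "(\<Sum>i<n'. (7 * 2 ^ (t - 3)) div 8 ^ i) = (8 * 2 ^ (t - 3) - 1 :: nat)"
      using less.IH[of "t - 3" n'] True by simp
    have "(\<Sum>i<n. (7 * 2 ^ t) div 8 ^ i) = (7 * 2 ^ t + (8 * 2 ^ (t - 3) - 1) :: nat)"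
      using divsum_shift[where n=n' and x="7 * 2 ^ t"] n d ih by simp
    also have "\<dots> = 8 * 2 ^ t - 1" using t by simp
    finally show ?thesis .
  next
    case False
    hence "t = 0 \<or> t = 1 \<or> t = 2" by arith
    then show ?thesis
    proof (elim disjE)
      assume t: "t = 0"
      show ?thesis using divsum_shift[where n=n' and x=7] divsum_small[where y=0 and n=n'] n t by simp
    next
      assume t: "t = 1"
      have "n' \<noteq> 0" using less.prems n t by (cases n') auto
      thus ?thesis using divsum_shift[where n=n' and x=14] divsum_small[where y=1 and n=n'] n t by simp
    next
      assume t: "t = 2"
      have "n' \<noteq> 0" using less.prems n t by (cases n') auto
      thus ?thesis using divsum_shift[where n=n' and x=28] divsum_small[where y=3 and n=n'] n t by simp
    qed
  qed
qed

lemma geo7a: "(\<Sum>i<m. 7 * (8::nat) ^ i) + 1 = 8 ^ m"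
  by (induction m) simp_all

lemma geo7: "(\<Sum>i<m. 7 * (8::nat) ^ (m - 1 - i)) = 8 ^ m - 1"
proof -
  have "(\<Sum>i<m. 7 * (8::nat) ^ (m - 1 - i)) = (\<Sum>i<m. 7 * 8 ^ (m - Suc i))"
    by (intro sum.cong) auto
  also have "\<dots> = (\<Sum>i<m. 7 * 8 ^ i)"
    by (rule sum.nat_diff_reindex[where g="\<lambda>i. 7 * (8::nat) ^ i"])
  finally show ?thesis using geo7a[of m] by simp
qed

lemma ceil_term:
  fixes m t i :: nat
  assumes i: "i < m" and tb: "(2::nat) ^ t \<le> 8 ^ (m - 1)"
  shows "\<lceil>real (7 * 8 ^ (m - 1) - 7 * 2 ^ t) / real 8 ^ i\<rceil> = int (7 * 8 ^ (m - 1 - i)) - int ((7 * 2 ^ t) div 8 ^ i)"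
proof -
  have e8: "(8::real) ^ (m - 1) = 8 ^ i * 8 ^ (m - 1 - i)" using i by (simp flip: power_add)
  have "real (7 * 8 ^ (m - 1) - 7 * 2 ^ t) = 7 * 8 ^ (m - 1) - 7 * 2 ^ t"
    using tb by (simp add: of_nat_diff)
  hence X: "real (7 * 8 ^ (m - 1) - 7 * 2 ^ t) / real 8 ^ i = of_int (int (7 * 8 ^ (m - 1 - i))) - real (7 * 2 ^ t) / real (8 ^ i)"
    using e8 by (simp add: diff_divide_distrib)
  have gen: "\<And>(K::int) (y::real). \<lceil>of_int K - y\<rceil> = K - \<lfloor>y\<rfloor>"
  proof -
    fix K :: int and y :: real
    have "of_int K - y = - y + of_int K" by simp
    hence "\<lceil>of_int K - y\<rceil> = \<lceil>- y\<rceil> + K" by (simp only: ceiling_add_of_int)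
    thus "\<lceil>of_int K - y\<rceil> = K - \<lfloor>y\<rfloor>" by (simp add: ceiling_minus)
  qed
  have "\<lceil>real (7 * 8 ^ (m - 1) - 7 * 2 ^ t) / real 8 ^ i\<rceil> = int (7 * 8 ^ (m - 1 - i)) - \<lfloor>real (7 * 2 ^ t) / real (8 ^ i)\<rfloor>"
    unfolding X by (rule gen)
  also have "\<lfloor>real (7 * 2 ^ t) / real (8 ^ i)\<rfloor> = int ((7 * 2 ^ t) div 8 ^ i)"
    by (rule floor_divide_of_nat_eq)
  finally show ?thesis .
qed

lemma griesmer_arith:
  fixes m t :: nat
  assumes tb: "t + 3 \<le> 3 * (m - 1)" and m: "m \<ge> 1"
  shows "(\<Sum>i<m. nat \<lceil>real (7 * 8 ^ (m - 1) - 7 * 2 ^ t) / real 8 ^ i\<rceil>) = 8 * 8 ^ (m - 1) - 8 * 2 ^ t"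
proof -
  have p: "(2::nat) ^ (t + 3) \<le> 8 ^ (m - 1)"
    using power_increasing[OF tb, of "2::nat"] by (simp add: power_mult)
  hence tb': "(2::nat) ^ t \<le> 8 ^ (m - 1)" by (simp add: power_add)
  have le: "(7 * 2 ^ t) div 8 ^ i \<le> (7 * 8 ^ (m - 1 - i) :: nat)" if "i < m" for i
  proof -
    have e8: "(8::nat) ^ (m - 1) = 8 ^ i * 8 ^ (m - 1 - i)" using that by (simp flip: power_add)
    have "(7 * 2 ^ t) div 8 ^ i \<le> (7 * 8 ^ (m - 1)) div (8 ^ i :: nat)" using tb' by (intro div_le_mono) simp
    also have "\<dots> = 7 * 8 ^ (m - 1 - i)" using e8 by simp
    finally show ?thesis .
  qed
  have "int (\<Sum>i<m. nat \<lceil>real (7 * 8 ^ (m - 1) - 7 * 2 ^ t) / real 8 ^ i\<rceil>)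
      = (\<Sum>i<m. int (7 * 8 ^ (m - 1 - i)) - int ((7 * 2 ^ t) div 8 ^ i))"
    unfolding of_nat_sum
  proof (rule sum.cong[OF refl])
    fix i assume "i \<in> {..<m}"
    hence i: "i < m" by simp
    show "int (nat \<lceil>real (7 * 8 ^ (m - 1) - 7 * 2 ^ t) / real 8 ^ i\<rceil>) = int (7 * 8 ^ (m - 1 - i)) - int ((7 * 2 ^ t) div 8 ^ i)"
    proof -
      have c: "\<lceil>real (7 * 8 ^ (m - 1) - 7 * 2 ^ t) / real 8 ^ i\<rceil> = int (7 * 8 ^ (m - 1 - i)) - int ((7 * 2 ^ t) div 8 ^ i)"
        by (rule ceil_term[OF i tb'])
      have nn: "0 \<le> int (7 * 8 ^ (m - 1 - i)) - int ((7 * 2 ^ t) div 8 ^ i)" using le[OF i] by linarith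
      show ?thesis unfolding c by (rule nat_0_le[OF nn])
    qed
  qed
  also have "\<dots> = int (\<Sum>i<m. 7 * 8 ^ (m - 1 - i)) - int (\<Sum>i<m. (7 * 2 ^ t) div 8 ^ i)"
    by (simp add: sum_subtractf of_nat_sum)
  also have "(\<Sum>i<m. (7 * 2 ^ t) div 8 ^ i) = (8 * 2 ^ t - 1 :: nat)"
  proof (rule divsum)
    have "7 * 2 ^ t < 8 * (2::nat) ^ t" by simp
    also have "\<dots> = 2 ^ (t + 3)" by (simp add: power_add)
    also have "\<dots> \<le> 8 ^ (m - 1)" by (rule p)
    also have "\<dots> < 8 ^ m" using m by (simp add: power_strict_increasing)
    finally show "7 * 2 ^ t < (8::nat) ^ m" .
  qed
  also note geo7
  finally have F: "int (\<Sum>i<m. nat \<lceil>real (7 * 8 ^ (m - 1) - 7 * 2 ^ t) / real 8 ^ i\<rceil>) = int (8 ^ m - 1) - int (8 * 2 ^ t - 1)" .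
  have m8: "(8::nat) ^ m = 8 * 8 ^ (m - 1)" using m by (cases m) auto
  have b: "8 * (2::nat) ^ t \<le> 8 * 8 ^ (m - 1)" using tb' by simp
  have a1: "int (8 ^ m - 1) = int (8 ^ m) - 1" by (simp add: of_nat_diff)
  have a2: "int (8 * 2 ^ t - 1) = int (8 * 2 ^ t) - 1" by (simp add: of_nat_diff)
  have a3: "int (8 * 8 ^ (m - 1) - 8 * 2 ^ t) = int (8 * 8 ^ (m - 1)) - int (8 * 2 ^ t)"
    using b by (simp only: of_nat_diff)
  have "int (\<Sum>i<m. nat \<lceil>real (7 * 8 ^ (m - 1) - 7 * 2 ^ t) / real 8 ^ i\<rceil>) = int (8 * 8 ^ (m - 1) - 8 * 2 ^ t)"
    using F a1 a2 a3 m8 by simp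
  thus ?thesis by (simp only: of_nat_eq_iff)
qed



lemma sum_fun_app': "(\<Sum>j\<in>J. g j) x = (\<Sum>j\<in>J. g j x)"
  by (induct J rule: infinite_finite_induct) auto

lemma card_split': "finite A \<Longrightarrow> card {x\<in>A. P x} + card {x\<in>A. \<not> P x} = card A"
proof -
  assume "finite A"
  moreover have "A = {x\<in>A. P x} \<union> {x\<in>A. \<not> P x}" by blast
  ultimately show ?thesis by (metis (no_types, lifting) card_Un_disjoint finite_Un disjoint_iff mem_Collect_eq)
qed

lemma card_filter_sum: "finite A \<Longrightarrow> card {x\<in>A. P x} = (\<Sum>x\<in>A. if P x then 1 else 0)"
proof -
  assume A: "finite A"
  have "card {x\<in>A. P x} = (\<Sum>x\<in>{x\<in>A. P x}. 1)" by simp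
  also have "\<dots> = (\<Sum>x\<in>A. if P x then 1 else 0)" by (rule sum.inter_filter[OF A])
  finally show ?thesis .
qed

lemma lin_finite:
  fixes C :: "('i \<Rightarrow> 'a::{field,finite}) set"
  assumes "is_linear_code I C"
  shows "finite C"
proof -
  have "finite (words I :: ('i \<Rightarrow> 'a) set)" unfolding words_def
    using finite_supp_funs(1)[of I] assms unfolding is_linear_code_def by simp
  thus ?thesis using assms unfolding is_linear_code_def using finite_subset by blast
qed

lemma card_code_ge:
  fixes C :: "('i \<Rightarrow> 'a::{field,finite}) set"
  assumes lin: "is_linear_code I C" and k: "code_dim C = k" "k \<ge> 1"
  shows "card (UNIV::'a set) ^ k \<le> card C"
proof -
  have finC: "finite C" by (rule lin_finite[OF lin])
  have sub: "fvs.subspace C" using lin unfolding is_linear_code_def by simp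
  obtain B where B: "B \<subseteq> C" "fvs.independent B" "C \<subseteq> fvs.span B" "card B = fvs.dim C"
    by (rule fvs.basis_exists)
  have cB: "card B = k" using B(4) k unfolding code_dim_def by simp
  hence finB: "finite B" using k(2) card_eq_0_iff by fastforce
  define g where "g = (\<lambda>u. \<Sum>v\<in>B. fscale (u v) v)"
  have inj: "inj_on g (PiE B (\<lambda>_. UNIV))"
  proof (rule inj_onI)
    fix u u' assume u: "u \<in> PiE B (\<lambda>_. UNIV)" and u': "u' \<in> PiE B (\<lambda>_. UNIV)" and e: "g u = g u'"
    have "(\<Sum>v\<in>B. fscale (u v - u' v) v) = g u - g u'"
      unfolding g_def by (simp add: fvs.scale_left_diff_distrib sum_subtractf)
    hence z: "(\<Sum>v\<in>B. fscale (u v - u' v) v) = 0" using e by simp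
    show "u = u'"
    proof (rule PiE_ext[OF u u'])
      fix v assume v: "v \<in> B"
      have "u v - u' v = 0"
        using fvs.independentD[OF B(2) finB subset_refl, of "\<lambda>v. u v - u' v", OF z v] .
      thus "u v = u' v" by simp
    qed
  qed
  have "g ` PiE B (\<lambda>_. UNIV) \<subseteq> fvs.span B"
  proof
    fix x assume "x \<in> g ` PiE B (\<lambda>_. UNIV)"
    then obtain u where x: "x = (\<Sum>v\<in>B. fscale (u v) v)" unfolding g_def by auto
    have "(\<Sum>v\<in>B. fscale (u v) v) \<in> fvs.span B"
    proof (rule fvs.span_sum)
      fix v assume "v \<in> B"
      thus "fscale (u v) v \<in> fvs.span B" by (intro fvs.span_scale fvs.span_base)
    qed
    thus "x \<in> fvs.span B" using x by simp
  qed
  also have "fvs.span B \<subseteq> C" by (rule fvs.span_minimal[OF B(1) sub])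
  finally have "card (g ` PiE B (\<lambda>_. UNIV)) \<le> card C" using finC by (intro card_mono) auto
  moreover have "card (g ` PiE B (\<lambda>_. UNIV)) = card (UNIV::'a set) ^ k"
    using card_image[OF inj] finB cB by (simp add: card_PiE)
  ultimately show ?thesis by simp
qed

lemma coord_count:
  fixes C :: "('i \<Rightarrow> 'a::{field,finite}) set"
  assumes lin: "is_linear_code I C"
  shows "card (UNIV::'a set) * card {c\<in>C. c i \<noteq> 0} \<le> (card (UNIV::'a set) - 1) * card C"
proof -
  let ?q = "card (UNIV::'a set)"
  have finC: "finite C" by (rule lin_finite[OF lin])
  have sub: "fvs.subspace C" using lin unfolding is_linear_code_def by simp
  have e: "card C = card ((\<lambda>c. c i) ` C) * card {c\<in>C. c i = 0}"
    by (rule fiber_card[where f="\<lambda>c. c i", OF finC]) (use fvs.subspace_diff[OF sub] in auto)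
  let ?a = "card ((\<lambda>c. c i) ` C)" and ?K = "card {c\<in>C. c i = 0}"
  have aq: "?a \<le> ?q" by (rule card_mono) auto
  have s: "card {c\<in>C. c i = 0} + card {c\<in>C. c i \<noteq> 0} = card C"
    using card_split'[OF finC, of "\<lambda>c. c i = 0"] by simp
  have 0: "0 \<in> C" using fvs.subspace_0[OF sub] .
  hence "(\<lambda>c. c i) ` C \<noteq> {}" by blast
  hence a1: "?a \<ge> 1" using finC by (simp add: Suc_le_eq card_gt_0_iff)
  have q1: "?q \<ge> 1" by (simp add: Suc_le_eq card_gt_0_iff)
  have nz: "card {c\<in>C. c i \<noteq> 0} = (?a - 1) * ?K" using s e a1 by (simp add: algebra_simps)
  have ineq: "int ?q * (int ?a - 1) \<le> (int ?q - 1) * int ?a" using aq by (simp add: algebra_simps)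
  have ia: "int (?a - 1) = int ?a - 1" using a1 by (simp add: of_nat_diff)
  have iq: "int (?q - 1) = int ?q - 1" using q1 by (simp add: of_nat_diff)
  have "int (?q * (?a - 1)) \<le> int ((?q - 1) * ?a)" unfolding of_nat_mult ia iq by (rule ineq)
  hence "?q * (?a - 1) \<le> (?q - 1) * ?a" by (simp only: of_nat_le_iff)
  hence "?q * (?a - 1) * ?K \<le> (?q - 1) * ?a * ?K" by (rule mult_right_mono) simp
  thus ?thesis using nz e by (simp add: mult.assoc)
qed

lemma plotkin:
  fixes C :: "('i \<Rightarrow> 'a::{field,finite}) set"
  assumes lin: "is_linear_code I C" and d: "\<And>c. c \<in> C \<Longrightarrow> c \<noteq> 0 \<Longrightarrow> d \<le> hwt I c"
  shows "card (UNIV::'a set) * ((card C - 1) * d) \<le> (card (UNIV::'a set) - 1) * card C * card I"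
proof -
  let ?q = "card (UNIV::'a set)"
  have finC: "finite C" by (rule lin_finite[OF lin])
  have finI: "finite I" using lin unfolding is_linear_code_def by simp
  have sub: "fvs.subspace C" using lin unfolding is_linear_code_def by simp
  have 0: "0 \<in> C" using fvs.subspace_0[OF sub] .
  have swap: "(\<Sum>c\<in>C. hwt I c) = (\<Sum>i\<in>I. card {c\<in>C. c i \<noteq> 0})"
  proof -
    have "(\<Sum>c\<in>C. hwt I c) = (\<Sum>c\<in>C. \<Sum>i\<in>I. if c i \<noteq> 0 then 1 else 0)"
      unfolding hwt_def supp_def using finI by (simp add: card_filter_sum)
    also have "\<dots> = (\<Sum>i\<in>I. \<Sum>c\<in>C. if c i \<noteq> 0 then 1 else 0)" by (rule sum.swap)
    also have "\<dots> = (\<Sum>i\<in>I. card {c\<in>C. c i \<noteq> 0})" using finC by (simp add: card_filter_sum)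
    finally show ?thesis .
  qed
  have lower: "(card C - 1) * d \<le> (\<Sum>c\<in>C. hwt I c)"
  proof -
    have "(card C - 1) * d = (\<Sum>c\<in>C - {0}. d)" using finC 0 by (simp add: card_Diff_singleton)
    also have "\<dots> \<le> (\<Sum>c\<in>C - {0}. hwt I c)" by (rule sum_mono) (use d in auto)
    also have "\<dots> \<le> (\<Sum>c\<in>C. hwt I c)" using finC by (intro sum_mono2) auto
    finally show ?thesis .
  qed
  have "?q * ((card C - 1) * d) \<le> ?q * (\<Sum>c\<in>C. hwt I c)" using lower by simp
  also have "\<dots> = (\<Sum>i\<in>I. ?q * card {c\<in>C. c i \<noteq> 0})" unfolding swap by (simp add: sum_distrib_left)
  also have "\<dots> \<le> (\<Sum>i\<in>I. (?q - 1) * card C)" by (rule sum_mono) (rule coord_count[OF lin])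
  also have "\<dots> = (?q - 1) * card C * card I" by simp
  finally show ?thesis .
qed

lemma ab_count:
  fixes c c' :: "'i \<Rightarrow> 'a::{field,finite}"
  assumes finI: "finite I" and supp: "supp I c' \<subseteq> supp I c"
  shows "(\<Sum>a\<in>UNIV - {0}. hwt I (c' - fscale a c)) + hwt I c' = (card (UNIV::'a set) - 1) * hwt I c"
proof -
  let ?q = "card (UNIV::'a set)"
  have pt: "card {a\<in>UNIV - {0}. c' i - a * c i \<noteq> 0} + (if c' i \<noteq> 0 then 1 else 0)
      = (?q - 1) * (if c i \<noteq> 0 then 1 else 0)" if i: "i \<in> I" for i
  proof (cases "c i = 0")
    case True
    hence "c' i = 0" using supp i unfolding supp_def by auto
    thus ?thesis using True by simp
  next
    case False
    have eq: "{a\<in>UNIV - {0}. c' i - a * c i \<noteq> 0} = (UNIV - {0}) - {c' i / c i}"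
      using False by (auto simp: field_simps)
    have cU: "card (UNIV - {0::'a}) = ?q - 1" by (simp add: card_Diff_singleton)
    show ?thesis
    proof (cases "c' i = 0")
      case True
      thus ?thesis using False eq cU by simp
    next
      case c'0: False
      have "c' i / c i \<in> UNIV - {0}" using c'0 False by simp
      hence "card ((UNIV - {0}) - {c' i / c i}) = ?q - 2" using cU by (simp add: card_Diff_singleton)
      moreover have "?q \<ge> 2"
      proof -
        have "{0, 1::'a} \<subseteq> UNIV" by simp
        hence "card {0, 1::'a} \<le> ?q" by (rule card_mono[rotated]) simp
        thus ?thesis by simp
      qed
      ultimately show ?thesis using False c'0 eq by simp
    qed
  qed
  have "(\<Sum>a\<in>UNIV - {0}. hwt I (c' - fscale a c)) = (\<Sum>a\<in>UNIV - {0}. \<Sum>i\<in>I. if c' i - a * c i \<noteq> 0 then 1 else 0)"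
    unfolding hwt_def supp_def fscale_def using finI by (simp add: card_filter_sum)
  also have "\<dots> = (\<Sum>i\<in>I. \<Sum>a\<in>UNIV - {0}. if c' i - a * c i \<noteq> 0 then 1 else 0)" by (rule sum.swap)
  also have "\<dots> = (\<Sum>i\<in>I. card {a\<in>UNIV - {0}. c' i - a * c i \<noteq> 0})"
    by (rule sum.cong[OF refl], rule card_filter_sum[symmetric]) simp
  finally have s1: "(\<Sum>a\<in>UNIV - {0}. hwt I (c' - fscale a c)) = (\<Sum>i\<in>I. card {a\<in>UNIV - {0}. c' i - a * c i \<noteq> 0})" .
  have h': "hwt I c' = (\<Sum>i\<in>I. if c' i \<noteq> 0 then 1 else 0)" unfolding hwt_def supp_def using finI by (simp add: card_filter_sum)
  have h: "hwt I c = (\<Sum>i\<in>I. if c i \<noteq> 0 then 1 else 0)" unfolding hwt_def supp_def using finI by (simp add: card_filter_sum)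
  have "(\<Sum>a\<in>UNIV - {0}. hwt I (c' - fscale a c)) + hwt I c'
     = (\<Sum>i\<in>I. card {a\<in>UNIV - {0}. c' i - a * c i \<noteq> 0} + (if c' i \<noteq> 0 then 1 else 0))"
    unfolding s1 h' by (simp add: sum.distrib)
  also have "\<dots> = (\<Sum>i\<in>I. (?q - 1) * (if c i \<noteq> 0 then 1 else 0))" by (rule sum.cong[OF refl]) (rule pt)
  also have "\<dots> = (?q - 1) * hwt I c" unfolding h by (simp add: sum_distrib_left)
  finally show ?thesis .
qed

lemma ab_bound:
  fixes C :: "('i \<Rightarrow> 'a::{field,finite}) set"
  assumes lin: "is_linear_code I C" and c: "c \<in> C" "c' \<in> C" "c' \<noteq> 0"
    and supp: "supp I c' \<subseteq> supp I c" and nm: "\<not> (\<exists>a. c' = fscale a c)"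
    and w: "\<And>x. x \<in> C \<Longrightarrow> x \<noteq> 0 \<Longrightarrow> w \<le> hwt I x"
  shows "card (UNIV::'a set) * w \<le> (card (UNIV::'a set) - 1) * hwt I c"
proof -
  let ?q = "card (UNIV::'a set)"
  have finI: "finite I" using lin unfolding is_linear_code_def by simp
  have sub: "fvs.subspace C" using lin unfolding is_linear_code_def by simp
  have "(\<Sum>a\<in>UNIV - {0::'a}. w) \<le> (\<Sum>a\<in>UNIV - {0}. hwt I (c' - fscale a c))"
  proof (rule sum_mono)
    fix a :: 'a assume "a \<in> UNIV - {0}"
    have "c' - fscale a c \<in> C" using fvs.subspace_diff[OF sub c(2) fvs.subspace_scale[OF sub c(1)]] .
    moreover have "c' - fscale a c \<noteq> 0" using nm by auto
    ultimately show "w \<le> hwt I (c' - fscale a c)" by (rule w)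
  qed
  moreover have "(\<Sum>a\<in>UNIV - {0::'a}. w) = (?q - 1) * w" by (simp add: card_Diff_singleton)
  moreover have "w \<le> hwt I c'" using w c by blast
  ultimately have "(?q - 1) * w + w \<le> (?q - 1) * hwt I c" using ab_count[OF finI supp] by linarith
  moreover have "?q \<ge> 1" by (simp add: Suc_le_eq card_gt_0_iff)
  ultimately show ?thesis by (simp add: algebra_simps)
qed


context cs begin

lemma gries: "is_griesmer DDc (codeP m DDc)"
proof -
  have tb: "(ss - 3) + 3 \<le> 3 * (m - 1)" using ss_le ss_ge3 by simp
  have m1: "m \<ge> 1" using m_ge3 by simp
  have "(\<Sum>i<m. nat \<lceil>real (7 * 8 ^ (m - 1) - 7 * 2 ^ (ss - 3)) / real 8 ^ i\<rceil>) = 8 * 8 ^ (m - 1) - 8 * 2 ^ (ss - 3)"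
    by (rule griesmer_arith[OF tb m1])
  moreover have "(8::nat) * 8 ^ (m - 1) = 2 ^ (3 * m)"
  proof -
    have "(8::nat) * 8 ^ (m - 1) = 8 ^ m" using m1 by (cases m) auto
    thus ?thesis by (simp add: power_mult)
  qed
  moreover have "real (card (UNIV :: 'a set)) = real (8::nat)" using card8 by simp
  ultimately show ?thesis
    unfolding is_griesmer_def dimC mind cardDc using AA_eq BB_eq by simp
qed

lemma mind_le: "c \<in> codeP m DDc \<Longrightarrow> c \<noteq> 0 \<Longrightarrow> 7 * AA - 7 * BB \<le> hwt DDc c"
proof -
  assume "c \<in> codeP m DDc" "c \<noteq> 0"
  hence "hwt DDc c \<in> nonzero_weights DDc (codeP m DDc)" unfolding nonzero_weights_def by blast
  thus ?thesis using Wlt unfolding nzw by auto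
qed

lemma max_le: "c \<in> codeP m DDc \<Longrightarrow> c \<noteq> 0 \<Longrightarrow> hwt DDc c \<le> 7 * AA"
proof -
  assume "c \<in> codeP m DDc" "c \<noteq> 0"
  hence "hwt DDc c \<in> nonzero_weights DDc (codeP m DDc)" unfolding nonzero_weights_def by blast
  thus ?thesis using Wlt unfolding nzw by auto
qed

lemma optimal: "distance_optimal DDc (codeP m DDc)"
  unfolding distance_optimal_def
proof
  assume "\<exists>C' :: (nat \<Rightarrow> 'a) set. is_nkd_code {1..card DDc} C' (card DDc) (code_dim (codeP m DDc)) (min_dist DDc (codeP m DDc) + 1)"
  then obtain C' :: "(nat \<Rightarrow> 'a) set" where C': "is_linear_code {1..card DDc} C'" "code_dim C' = m"
    "min_dist {1..card DDc} C' = 7 * AA - 7 * BB + 1"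
    unfolding is_nkd_code_def dimC mind by auto
  let ?I = "{1..card DDc}"
  have finC: "finite C'" by (rule lin_finite[OF C'(1)])
  have d: "7 * AA - 7 * BB + 1 \<le> hwt ?I c" if "c \<in> C'" "c \<noteq> 0" for c
  proof -
    have "finite (nonzero_weights ?I C')" unfolding nonzero_weights_def using finC by simp
    moreover have "hwt ?I c \<in> nonzero_weights ?I C'" unfolding nonzero_weights_def using that by blast
    ultimately have "Min (nonzero_weights ?I C') \<le> hwt ?I c" by (rule Min_le)
    thus ?thesis using C'(3) unfolding min_dist_def by simp
  qed
  have P: "8 * ((card C' - 1) * (7 * AA - 7 * BB + 1)) \<le> 7 * card C' * card ?I"
    using plotkin[OF C'(1) d] card8 by simp
  have K: "8 ^ m \<le> card C'" using card_code_ge[OF C'(1) C'(2)] m_ge3 card8 by simp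
  define X where "X = AA - BB"
  have X1: "X \<ge> 1" unfolding X_def using AB by linarith
  have W: "7 * AA - 7 * BB = 7 * X" unfolding X_def by simp
  have n: "card ?I = 8 * X"
  proof -
    have "card ?I = 2 ^ (3 * m) - 2 ^ ss" using cardDc by simp
    also have "(2::nat) ^ (3 * m) = 8 * AA"
    proof -
      have "(2::nat) ^ (3 * m) = 8 ^ m" by (simp add: power_mult)
      also have "\<dots> = 8 * 8 ^ (m - 1)" using m_ge3 by (cases m) auto
      finally show ?thesis using AA_eq by simp
    qed
    finally show ?thesis using BB_eq unfolding X_def by (simp add: diff_mult_distrib2)
  qed
  have K2: "card C' \<ge> 7 * X + 2"
  proof -
    have "(8::nat) ^ m = 8 * AA"
    proof -
      have "(8::nat) ^ m = 8 * 8 ^ (m - 1)" using m_ge3 by (cases m) auto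
      thus ?thesis using AA_eq by simp
    qed
    hence "8 * AA \<le> card C'" using K by simp
    moreover have "X \<le> AA" unfolding X_def by simp
    moreover have "AA \<ge> 2" using AB by linarith
    ultimately show ?thesis by linarith
  qed
  obtain K' where KK: "card C' = Suc K'" using K2 by (cases "card C'") auto
  have "8 * (K' * (7 * X + 1)) \<le> 7 * Suc K' * (8 * X)" using P KK W n by simp
  hence "8 * K' \<le> 56 * X" by (simp add: algebra_simps)
  moreover have "K' \<ge> 7 * X + 1" using K2 KK by simp
  ultimately show False by linarith
qed

lemma minimal: "ss \<le> 3 * m - 4 \<Longrightarrow> is_minimal_code DDc (codeP m DDc)"
proof -
  assume sm: "ss \<le> 3 * m - 4"
  have lin': "is_linear_code DDc (codeP m DDc)" by (rule lin)
  have B16: "16 * BB \<le> AA"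
  proof -
    have "(ss - 3) + 4 \<le> 3 * (m - 1)" using sm ss_ge3 m_ge3 by linarith
    hence "(2::nat) ^ ((ss - 3) + 4) \<le> 2 ^ (3 * (m - 1))" by (rule power_increasing) simp
    thus ?thesis by (simp add: power_add)
  qed
  show ?thesis unfolding is_minimal_code_def
  proof (intro ballI impI)
    fix c c' assume c: "c \<in> codeP m DDc" "c \<noteq> 0" and c': "c' \<in> codeP m DDc" "c' \<noteq> 0 \<and> supp DDc c' \<subseteq> supp DDc c"
    show "\<exists>a. c' = fscale a c"
    proof (rule ccontr)
      assume nm: "\<not> (\<exists>a. c' = fscale a c)"
      have "card (UNIV::'a set) * (7 * AA - 7 * BB) \<le> (card (UNIV::'a set) - 1) * hwt DDc c"
        by (rule ab_bound[OF lin' c(1) c'(1)]) (use c' nm mind_le in auto)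
      hence "8 * (7 * AA - 7 * BB) \<le> 7 * hwt DDc c" using card8 by simp
      moreover have "hwt DDc c \<le> 7 * AA" by (rule max_le[OF c])
      ultimately have "8 * (7 * AA - 7 * BB) \<le> 49 * AA" by linarith
      moreover have "BB \<le> AA" using B16 by linarith
      moreover have "AA \<ge> 1" using AB by linarith
      ultimately show False using B16 by linarith
    qed
  qed
qed

end

theorem mainTheorem6:
  fixes \<omega> :: "'a::{field,finite}"
    and m :: nat and L M N :: "nat set"
  assumes card8: "card (UNIV :: 'a set) = 8"
    and root: "\<omega>^3 + \<omega> + 1 = 0"
    and LMN: "L \<noteq> {}" "M \<noteq> {}" "N \<noteq> {}"
    and proper: "L \<union> M \<union> N \<subset> {1..m}"
    and two: "(L - (M \<union> N) \<noteq> {} \<and> M - (N \<union> L) \<noteq> {}) \<or>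
              (M - (N \<union> L) \<noteq> {} \<and> N - (L \<union> M) \<noteq> {}) \<or>
              (L - (M \<union> N) \<noteq> {} \<and> N - (L \<union> M) \<noteq> {})"
  defines "Dc \<equiv> fvec m - sumset3 \<omega> (Delta m L) (Delta m M) (Delta m N)"
    and "s \<equiv> card L + card M + card N"
  shows "is_nkd_code Dc (codeP m Dc) (2^(3*m) - 2^s) m (7 * 2^(3*(m-1)) - 7 * 2^(s-3))
       \<and> is_l_weight Dc (codeP m Dc) 4
       \<and> nonzero_weights Dc (codeP m Dc) =
           {7 * 2^(3*(m-1)) - 7 * 2^(s-3), 7 * 2^(3*(m-1)) - 6 * 2^(s-3),
            7 * 2^(3*(m-1)) - 4 * 2^(s-3), 7 * 2^(3*(m-1))}
       \<and> is_griesmer Dc (codeP m Dc)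
       \<and> distance_optimal Dc (codeP m Dc)
       \<and> (s \<le> 3*m - 4 \<longrightarrow> is_minimal_code Dc (codeP m Dc))"
proof -
  interpret cs \<omega> m L M N
    by (rule cs.intro) (rule card8 root LMN proper two)+
  have Dc_eq: "Dc = DDc" unfolding Dc_def DDc_def VV_def DD_def ..
  have s_eq: "s = ss" unfolding s_def ss_def ..
  show ?thesis unfolding Dc_eq s_eq is_nkd_code_def is_l_weight_def
    using lin cardDc dimC mind nzw card4 gries optimal minimal by simp
qed

end
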